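(* Suppose $\mu_P$ is the Parry measure on $\Sigma_A$, i.e. $P_{ij}=\frac{A_{ij}v_j}{\lambda(A)v_i}$ where $\mathbf v$ is a positive right eigenvector of $A$ for its Perron root $\lambda(A)$. Then for every finite nonempty collection $\mathcal G$ of allowed words, $$\rho(H_{\mathcal G})=-\ln\frac{\lambda(B_{\mathcal G})}{\lambda(A)}=h_{\rm top}(\Sigma_A)-h_{\rm top}(\Sigma_{B_{\mathcal G}}),$$ where $\Sigma_{B_{\mathcal G}}$ is the subshift of finite type with adjacency matrix $B_{\mathcal G}$ and $h_{\rm top}$ denotes topological entropy.
   Context: Let $\Sigma=\{1,\dots,N\}$ and let $A$ be an irreducible $N\times N$ $0$–$1$ matrix. $\Sigma_A=\{x\in\Sigma^{\mathbb N}: A_{x_nx_{n+1}}=1\ \forall n\}$ with left shift $\sigma$; $\mathcal L_n$ is the set of allowed words of length $n$ (words appearing in some element of $\Sigma_A$); $C_w$ is the cylinder of sequences in $\Sigma_A$ beginning with $w$. For a row-stochastic $P$ compatible with $A$ ($P_{ij}>0$ iff $A_{ij}=1$) with stationary vector $\mathbf p$, $\mu_P(C_w)=p_{w_1}P_{w_1w_2}\cdots P_{w_{n-1}w_n}$. For a finite collection $\mathcal G$ of allowed words, $H_{\mathcal G}=\bigcup_{w\in\mathcal G}C_w$; $\mathcal W_m=\{x:\sigma^ix\notin H_{\mathcal G},0\le i\le m\}$ and $\rho(H_{\mathcal G})=-\lim_m\frac1m\ln\mu_P(\mathcal W_m)$. With $r$ the maximal length of a word in $\mathcal G$ and $X*Y=x_1\cdots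 x_ny_n$ for $X=x_1\cdots x_n,Y=y_1\cdots y_n$ with $x_2\cdots x_n=y_1\cdots y_{n-1}$: if $r\ge2$, $B_{\mathcal G}$ is the $0$–$1$ matrix indexed by $\mathcal L_{r-1}$ with $(B_{\mathcal G})_{XY}=1$ iff $X*Y$ is defined, lies in $\mathcal L_r$ and contains no word of $\mathcal G$ as a subword; if $r=1$, $B_{\mathcal G}$ is indexed by $\Sigma$ with $(B_{\mathcal G})_{ij}=1$ iff $ij\in\mathcal L_2$ and $i,j\notin\mathcal G$. $\lambda(\cdot)$ is the spectral radius. *)

theory Defs
  imports "HOL-Probability.Probability" "HOL-Library.Sublist"
begin

(* Matrices are functions 'i => 'i => real, restricted to a finite index set I. *)

fun mpow :: "'i set \<Rightarrow> ('i \<Rightarrow> 'i \<Rightarrow> real) \<Rightarrow> nat \<Rightarrow> 'i \<Rightarrow> 'i \<Rightarrow> real" where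
  "mpow I M 0 = (\<lambda>i j. if i = j then 1 else 0)"
| "mpow I M (Suc n) = (\<lambda>i j. \<Sum>k\<in>I. mpow I M n i k * M k j)"

definition irreducible_mat :: "'i set \<Rightarrow> ('i \<Rightarrow> 'i \<Rightarrow> real) \<Rightarrow> bool" where
  "irreducible_mat I M \<longleftrightarrow> (\<forall>i\<in>I. \<forall>j\<in>I. \<exists>n>0. mpow I M n i j > 0)"

definition zero_one_mat :: "'i set \<Rightarrow> ('i \<Rightarrow> 'i \<Rightarrow> real) \<Rightarrow> bool" where
  "zero_one_mat I M \<longleftrightarrow> (\<forall>i\<in>I. \<forall>j\<in>I. M i j = 0 \<or> M i j = 1)"

definition mat_eigenvalues :: "'i set \<Rightarrow> ('i \<Rightarrow> 'i \<Rightarrow> real) \<Rightarrow> complex set" where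
  "mat_eigenvalues I M = {z. \<exists>v :: 'i \<Rightarrow> complex. (\<exists>i\<in>I. v i \<noteq> 0) \<and>
      (\<forall>i\<in>I. (\<Sum>j\<in>I. complex_of_real (M i j) * v j) = z * v i)}"

definition spec_rad :: "'i set \<Rightarrow> ('i \<Rightarrow> 'i \<Rightarrow> real) \<Rightarrow> real" where
  "spec_rad I M = Max (cmod ` mat_eigenvalues I M)"

definition sft :: "'i set \<Rightarrow> ('i \<Rightarrow> 'i \<Rightarrow> real) \<Rightarrow> (nat \<Rightarrow> 'i) set" where
  "sft I M = {x. (\<forall>n. x n \<in> I) \<and> (\<forall>n. M (x n) (x (Suc n)) = 1)}"

definition lang :: "(nat \<Rightarrow> 'i) set \<Rightarrow> nat \<Rightarrow> 'i list set" where
  "lang X n = {w. length w = n \<and> (\<exists>x\<in>X. \<exists>k. w = map x [k..<k+n])}"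

definition htop :: "(nat \<Rightarrow> 'i) set \<Rightarrow> real" where
  "htop X = lim (\<lambda>n. ln (real (card (lang X n))) / real n)"

definition cyl :: "(nat \<Rightarrow> 'i) set \<Rightarrow> 'i list \<Rightarrow> (nat \<Rightarrow> 'i) set" where
  "cyl X w = {x\<in>X. \<forall>i<length w. x i = w ! i}"

definition hole :: "(nat \<Rightarrow> 'i) set \<Rightarrow> 'i list set \<Rightarrow> (nat \<Rightarrow> 'i) set" where
  "hole X G = (\<Union>w\<in>G. cyl X w)"

definition shiftn :: "nat \<Rightarrow> (nat \<Rightarrow> 'i) \<Rightarrow> (nat \<Rightarrow> 'i)" where
  "shiftn i x = (\<lambda>n. x (n + i))"

definition survivors :: "(nat \<Rightarrow> 'i) set \<Rightarrow> 'i list set \<Rightarrow> nat \<Rightarrow> (nat \<Rightarrow> 'i) set" where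
  "survivors X G m = {x\<in>X. \<forall>i\<le>m. shiftn i x \<notin> hole X G}"

definition maxlen :: "'i list set \<Rightarrow> nat" where
  "maxlen G = Max (length ` G)"

(* index set of B_G: L_{r-1} if r >= 2; if r = 1 the symbols i are represented by
   the one-letter words [i] (i.e. L_1) *)
definition B_index :: "(nat \<Rightarrow> 'i) set \<Rightarrow> 'i list set \<Rightarrow> 'i list set" where
  "B_index X G = (if maxlen G \<ge> 2 then lang X (maxlen G - 1) else lang X 1)"

(* X * Y is defined iff tl X = butlast Y, and then X * Y = X @ [last Y] *)
definition B_mat :: "(nat \<Rightarrow> 'i) set \<Rightarrow> 'i list set \<Rightarrow> 'i list \<Rightarrow> 'i list \<Rightarrow> real" where
  "B_mat X G U V =
     (if maxlen G \<ge> 2 then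
        (if U \<noteq> [] \<and> V \<noteq> [] \<and> tl U = butlast V \<and> U @ [last V] \<in> lang X (maxlen G)
            \<and> \<not> (\<exists>g\<in>G. sublist g (U @ [last V])) then 1 else 0)
      else
        (if length U = 1 \<and> length V = 1 \<and> U @ V \<in> lang X 2 \<and> U \<notin> G \<and> V \<notin> G then 1 else 0))"

end

theory Submission
  imports Defs "Jordan_Normal_Form.Spectral_Radius"
begin


definition cmat :: "nat \<Rightarrow> (nat \<Rightarrow> 'i) \<Rightarrow> ('i \<Rightarrow> 'i \<Rightarrow> real) \<Rightarrow> complex mat" where
  "cmat d h M = mat d d (\<lambda>(a,b). complex_of_real (M (h a) (h b)))"

lemma cmat_carrier: "cmat d h M \<in> carrier_mat d d"
  by (simp add: cmat_def)

lemma cmat_pow: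
  assumes bij: "bij_betw h {0..<d} I" and a: "a < d" and b: "b < d"
  shows "(cmat d h M ^\<^sub>m k) $$ (a,b) = complex_of_real (mpow I M k (h a) (h b))"
  using b
proof (induction k arbitrary: b)
  case 0
  have "h a = h b \<longleftrightarrow> a = b" using bij a 0 unfolding bij_betw_def inj_on_def by auto
  then show ?case using a 0 by (simp add: cmat_def)
next
  case (Suc k)
  have "(cmat d h M ^\<^sub>m Suc k) $$ (a,b) = row (cmat d h M ^\<^sub>m k) a \<bullet> col (cmat d h M) b"
    using a Suc.prems by (simp only: pow_mat.simps(2)) (rule index_mult_mat(1); simp add: cmat_def)
  also have "\<dots> = (\<Sum>c\<in>{0..<d}. complex_of_real (mpow I M k (h a) (h c)) * complex_of_real (M (h c) (h b)))"
    unfolding scalar_prod_def using a Suc.prems Suc.IH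
    by (intro sum.cong) (auto simp: cmat_def cmat_carrier pow_mat_dim_square[OF cmat_carrier])
  also have "\<dots> = complex_of_real (\<Sum>c\<in>{0..<d}. mpow I M k (h a) (h c) * M (h c) (h b))"
    by simp
  also have "(\<Sum>c\<in>{0..<d}. mpow I M k (h a) (h c) * M (h c) (h b)) = (\<Sum>j\<in>I. mpow I M k (h a) j * M j (h b))"
    using sum.reindex_bij_betw[OF bij, of "\<lambda>j. mpow I M k (h a) j * M j (h b)"] by simp
  finally show ?case by simp
qed

lemma cmat_eig:
  assumes bij: "bij_betw h {0..<d} I"
  shows "mat_eigenvalues I M = Spectral_Radius.spectrum (cmat d h M)"
proof -
  define hi where "hi = the_inv_into {0..<d} h"
  have hi1: "\<And>i. i \<in> I \<Longrightarrow> hi i < d \<and> h (hi i) = i"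
    using bij unfolding hi_def bij_betw_def
    by (metis atLeastLessThan_iff f_the_inv_into_f the_inv_into_into order_refl)
  have hi2: "\<And>a. a < d \<Longrightarrow> hi (h a) = a"
    using bij unfolding hi_def bij_betw_def by (simp add: the_inv_into_f_f)
  have hI: "\<And>a. a < d \<Longrightarrow> h a \<in> I" using bij unfolding bij_betw_def by auto
  have dimC: "dim_row (cmat d h M) = d" "dim_col (cmat d h M) = d" by (auto simp: cmat_def)
  have mv: "(cmat d h M *\<^sub>v vv) $ a = (\<Sum>j\<in>I. complex_of_real (M (h a) j) * vv $ hi j)"
    if "a < d" "dim_vec vv = d" for vv a
  proof -
    have "(cmat d h M *\<^sub>v vv) $ a = (\<Sum>b\<in>{0..<d}. complex_of_real (M (h a) (h b)) * vv $ b)"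
      using that by (simp add: cmat_def scalar_prod_def)
    also have "\<dots> = (\<Sum>b\<in>{0..<d}. complex_of_real (M (h a) (h b)) * vv $ hi (h b))"
      by (intro sum.cong) (auto simp: hi2)
    also have "\<dots> = (\<Sum>j\<in>I. complex_of_real (M (h a) j) * vv $ hi j)"
      using sum.reindex_bij_betw[OF bij, of "\<lambda>j. complex_of_real (M (h a) j) * vv $ hi j"] by simp
    finally show ?thesis .
  qed
  show ?thesis
  proof (rule subset_antisym; rule subsetI)
    fix z assume "z \<in> mat_eigenvalues I M"
    then obtain v where v0: "\<exists>i\<in>I. v i \<noteq> 0" and ve: "\<forall>i\<in>I. (\<Sum>j\<in>I. complex_of_real (M i j) * v j) = z * v i"
      unfolding mat_eigenvalues_def by auto
    define vv where "vv = vec d (\<lambda>a. v (h a))"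
    have vvi: "\<And>j. j \<in> I \<Longrightarrow> vv $ hi j = v j" using hi1 by (simp add: vv_def)
    have "eigenvector (cmat d h M) vv z"
      unfolding eigenvector_def
    proof (intro conjI)
      show "vv \<in> carrier_vec (dim_row (cmat d h M))" by (simp add: vv_def dimC)
      show "vv \<noteq> 0\<^sub>v (dim_row (cmat d h M))"
      proof
        assume "vv = 0\<^sub>v (dim_row (cmat d h M))"
        then have "\<And>j. j \<in> I \<Longrightarrow> v j = 0" using vvi hi1 dimC by (metis index_zero_vec(1))
        with v0 show False by auto
      qed
      show "cmat d h M *\<^sub>v vv = z \<cdot>\<^sub>v vv"
      proof (rule eq_vecI)
        fix a assume "a < dim_vec (z \<cdot>\<^sub>v vv)"
        then have a: "a < d" by (simp add: vv_def)
        have "(cmat d h M *\<^sub>v vv) $ a = (\<Sum>j\<in>I. complex_of_real (M (h a) j) * v j)"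
          using mv[OF a] vvi by (simp add: vv_def)
        also have "\<dots> = z * v (h a)" using ve hI[OF a] by auto
        finally show "(cmat d h M *\<^sub>v vv) $ a = (z \<cdot>\<^sub>v vv) $ a" using a by (simp add: vv_def)
      qed (simp add: vv_def dimC)
    qed
    then show "z \<in> Spectral_Radius.spectrum (cmat d h M)"
      unfolding Spectral_Radius.spectrum_def eigenvalue_def by auto
  next
    fix z assume "z \<in> Spectral_Radius.spectrum (cmat d h M)"
    then obtain vv where ev: "eigenvector (cmat d h M) vv z"
      unfolding Spectral_Radius.spectrum_def eigenvalue_def by auto
    then have vc: "vv \<in> carrier_vec d" and vn: "vv \<noteq> 0\<^sub>v d" and eq: "cmat d h M *\<^sub>v vv = z \<cdot>\<^sub>v vv"
      unfolding eigenvector_def dimC by auto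
    have dv: "dim_vec vv = d" using vc by auto
    define v where "v = (\<lambda>j. vv $ hi j)"
    have "\<exists>i\<in>I. v i \<noteq> 0"
    proof (rule ccontr)
      assume "\<not> ?thesis"
      then have "\<And>a. a < d \<Longrightarrow> vv $ a = 0" using hI hi2 unfolding v_def by metis
      then have "vv = 0\<^sub>v d" using dv by (intro eq_vecI) auto
      with vn show False by auto
    qed
    moreover have "\<forall>i\<in>I. (\<Sum>j\<in>I. complex_of_real (M i j) * v j) = z * v i"
    proof
      fix i assume i: "i \<in> I"
      have "(\<Sum>j\<in>I. complex_of_real (M i j) * v j) = (cmat d h M *\<^sub>v vv) $ hi i"
        using mv[of "hi i" vv] hi1[OF i] dv by (simp add: v_def)
      also have "\<dots> = z * v i" using eq hi1[OF i] dv by (simp add: v_def)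
      finally show "(\<Sum>j\<in>I. complex_of_real (M i j) * v j) = z * v i" .
    qed
    ultimately show "z \<in> mat_eigenvalues I M" unfolding mat_eigenvalues_def by auto
  qed
qed

lemma eig_fin_ne:
  assumes "finite I" "I \<noteq> {}"
  shows "finite (mat_eigenvalues I M)" "mat_eigenvalues I M \<noteq> {}"
proof -
  obtain h where bij: "bij_betw h {0..<card I} I" using ex_bij_betw_nat_finite[OF assms(1)] by auto
  have "card I > 0" using assms by auto
  then show "finite (mat_eigenvalues I M)" "mat_eigenvalues I M \<noteq> {}"
    unfolding cmat_eig[OF bij]
    using card_finite_spectrum(1)[OF cmat_carrier[of "card I" h M]] spectrum_non_empty[OF cmat_carrier[of "card I" h M]] by auto
qed

lemma spec_rad_ge:
  assumes "finite I" "I \<noteq> {}" "z \<in> mat_eigenvalues I M"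
  shows "cmod z \<le> spec_rad I M"
  unfolding spec_rad_def using eig_fin_ne[OF assms(1,2)] assms(3) by (intro Max_ge) auto

lemma spec_rad_attained:
  assumes "finite I" "I \<noteq> {}"
  shows "\<exists>z\<in>mat_eigenvalues I M. cmod z = spec_rad I M"
proof -
  have "spec_rad I M \<in> cmod ` mat_eigenvalues I M"
    unfolding spec_rad_def using eig_fin_ne[OF assms] by (intro Max_in) auto
  then show ?thesis by auto
qed

lemma spec_rad_nonneg:
  assumes "finite I" "I \<noteq> {}"
  shows "spec_rad I M \<ge> 0"
  using spec_rad_attained[OF assms, of M] by (metis norm_ge_zero)

lemma mpow_scale:
  "mpow I (\<lambda>i j. M i j / r) k i j = mpow I M k i j / r ^ k"
proof (induction k arbitrary: j)
  case 0 then show ?case by simp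
next
  case (Suc k)
  then show ?case by (simp add: sum_divide_distrib mult.commute)
qed

lemma gelfand:
  assumes fin: "finite I" and ne: "I \<noteq> {}" and lt: "spec_rad I M < r"
  shows "\<exists>C. \<forall>k. \<forall>i\<in>I. \<forall>j\<in>I. \<bar>mpow I M k i j\<bar> \<le> C * r ^ k"
proof -
  have r0: "r > 0" using spec_rad_nonneg[OF fin ne, of M] lt by linarith
  define M' where "M' = (\<lambda>i j. M i j / r)"
  obtain h where bij: "bij_betw h {0..<card I} I" using ex_bij_betw_nat_finite[OF fin] by auto
  define d where "d = card I"
  have d0: "d > 0" using fin ne by (auto simp: d_def)
  have sub: "z * complex_of_real r \<in> mat_eigenvalues I M" if "z \<in> mat_eigenvalues I M'" for z
  proof -
    from that obtain v where v0: "\<exists>i\<in>I. v i \<noteq> 0" and ve: "\<forall>i\<in>I. (\<Sum>j\<in>I. complex_of_real (M' i j) * v j) = z * v i"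
      unfolding mat_eigenvalues_def by auto
    have "\<forall>i\<in>I. (\<Sum>j\<in>I. complex_of_real (M i j) * v j) = z * complex_of_real r * v i"
    proof
      fix i assume i: "i \<in> I"
      have "(\<Sum>j\<in>I. complex_of_real (M i j) * v j) = complex_of_real r * (\<Sum>j\<in>I. complex_of_real (M' i j) * v j)"
        unfolding sum_distrib_left M'_def using r0 by (intro sum.cong) (auto simp: field_simps)
      then show "(\<Sum>j\<in>I. complex_of_real (M i j) * v j) = z * complex_of_real r * v i" using ve i by simp
    qed
    with v0 show ?thesis unfolding mat_eigenvalues_def by auto
  qed
  have lt1: "x < 1" if "x \<in> norm ` Spectral_Radius.spectrum (cmat d h M')" for x
  proof -
    from that obtain z where z: "z \<in> mat_eigenvalues I M'" and x: "x = cmod z"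
      using cmat_eig[OF bij] unfolding d_def by auto
    have "cmod (z * complex_of_real r) \<le> spec_rad I M" using spec_rad_ge[OF fin ne sub[OF z]] .
    then have "cmod z * r \<le> spec_rad I M" using r0 by (simp add: norm_mult)
    then have "cmod z * r < 1 * r" using lt by simp
    then show ?thesis using x r0 mult_less_cancel_right_pos[of r "cmod z" 1] by simp
  qed
  have "spectral_radius (cmat d h M') < 1"
    unfolding spectral_radius_def
    using eig_fin_ne[OF fin ne, of M'] cmat_eig[OF bij, of M'] lt1 unfolding d_def[symmetric]
    by (subst Max_less_iff) auto
  then obtain c where c: "\<forall>k. norm_bound (cmat d h M' ^\<^sub>m k) c"
    using spectral_radius_jnf_norm_bound_less_1_upper_triangular[OF cmat_carrier] by blast
  have "\<forall>k. \<forall>i\<in>I. \<forall>j\<in>I. \<bar>mpow I M k i j\<bar> \<le> c * r ^ k"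
  proof (intro allI ballI)
    fix k i j assume i: "i \<in> I" and j: "j \<in> I"
    obtain a where a: "a < d" "h a = i" using bij i unfolding bij_betw_def d_def by force
    obtain b where b: "b < d" "h b = j" using bij j unfolding bij_betw_def d_def by force
    have "norm ((cmat d h M' ^\<^sub>m k) $$ (a,b)) \<le> c"
      using c a b unfolding norm_bound_def by (simp add: cmat_def)
    then have "\<bar>mpow I M' k i j\<bar> \<le> c"
      using cmat_pow[OF bij, of a b M' k] a b unfolding d_def by simp
    then have "\<bar>mpow I M k i j\<bar> / r ^ k \<le> c" using r0 by (simp add: M'_def mpow_scale abs_div)
    then show "\<bar>mpow I M k i j\<bar> \<le> c * r ^ k" using r0 by (simp add: divide_le_eq)
  qed
  then show ?thesis by blast
qed

lemma mpow_nonneg: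
  assumes "\<forall>i\<in>I. \<forall>j\<in>I. M i j \<ge> 0"
  shows "j \<in> I \<Longrightarrow> mpow I M k i j \<ge> 0"
proof (induction k arbitrary: j)
  case 0 then show ?case by simp
next
  case (Suc k) then show ?case using assms by (auto intro!: sum_nonneg)
qed

lemma mpow_eigvec:
  assumes "\<forall>i\<in>I. (\<Sum>j\<in>I. complex_of_real (M i j) * v j) = z * v i" "i \<in> I" "finite I"
  shows "(\<Sum>j\<in>I. complex_of_real (mpow I M k i j) * v j) = z ^ k * v i"
proof (induction k)
  case 0
  have "(\<Sum>j\<in>I. complex_of_real (mpow I M 0 i j) * v j) = (\<Sum>j\<in>I. if j = i then v j else 0)"
    by (intro sum.cong) auto
  also have "\<dots> = v i" using assms(2,3) by (auto simp: sum.delta')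
  finally show ?case by simp
next
  case (Suc k)
  have "(\<Sum>j\<in>I. complex_of_real (mpow I M (Suc k) i j) * v j)
      = (\<Sum>j\<in>I. \<Sum>l\<in>I. complex_of_real (mpow I M k i l) * (complex_of_real (M l j) * v j))"
    by (simp add: sum_distrib_right mult.assoc)
  also have "\<dots> = (\<Sum>l\<in>I. complex_of_real (mpow I M k i l) * (\<Sum>j\<in>I. complex_of_real (M l j) * v j))"
    by (subst sum.swap) (simp add: sum_distrib_left)
  also have "\<dots> = (\<Sum>l\<in>I. complex_of_real (mpow I M k i l) * v l) * z"
    using assms(1) by (simp add: sum_distrib_right sum_distrib_left mult.assoc mult.commute)
  finally show ?case using Suc by simp
qed

lemma rowsum_lower:
  assumes fin: "finite I" and ne: "I \<noteq> {}" and nn: "\<forall>i\<in>I. \<forall>j\<in>I. M i j \<ge> 0"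
  shows "\<exists>i\<in>I. \<forall>k. (\<Sum>j\<in>I. mpow I M k i j) \<ge> spec_rad I M ^ k"
proof -
  obtain z where z: "z \<in> mat_eigenvalues I M" and zr: "cmod z = spec_rad I M"
    using spec_rad_attained[OF fin ne] by blast
  obtain v where v0: "\<exists>i\<in>I. v i \<noteq> 0" and ve: "\<forall>i\<in>I. (\<Sum>j\<in>I. complex_of_real (M i j) * v j) = z * v i"
    using z unfolding mat_eigenvalues_def by auto
  define m where "m = Max ((\<lambda>j. cmod (v j)) ` I)"
  have "m \<in> (\<lambda>j. cmod (v j)) ` I" unfolding m_def using fin ne by (intro Max_in) auto
  then obtain i where i: "i \<in> I" and mi: "cmod (v i) = m" by auto
  have mge: "\<And>j. j \<in> I \<Longrightarrow> cmod (v j) \<le> m" unfolding m_def using fin by (intro Max_ge) auto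
  have m0: "m > 0" using v0 mge by (metis norm_le_zero_iff not_less order.strict_trans1 zero_less_norm_iff)
  have "\<forall>k. (\<Sum>j\<in>I. mpow I M k i j) \<ge> spec_rad I M ^ k"
  proof
    fix k
    have "spec_rad I M ^ k * m = cmod (z ^ k * v i)" using zr mi by (simp add: norm_mult norm_power)
    also have "\<dots> = cmod (\<Sum>j\<in>I. complex_of_real (mpow I M k i j) * v j)"
      using mpow_eigvec[OF ve i fin] by simp
    also have "\<dots> \<le> (\<Sum>j\<in>I. cmod (complex_of_real (mpow I M k i j) * v j))" by (rule norm_sum)
    also have "\<dots> \<le> (\<Sum>j\<in>I. mpow I M k i j * m)"
    proof (intro sum_mono)
      fix j assume j: "j \<in> I"
      have "mpow I M k i j \<ge> 0" using mpow_nonneg[OF nn j] .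
      then show "cmod (complex_of_real (mpow I M k i j) * v j) \<le> mpow I M k i j * m"
        using mge[OF j] by (simp add: norm_mult mult_left_mono)
    qed
    also have "\<dots> = (\<Sum>j\<in>I. mpow I M k i j) * m" by (simp add: sum_distrib_right)
    finally show "(\<Sum>j\<in>I. mpow I M k i j) \<ge> spec_rad I M ^ k" using m0 by simp
  qed
  with i show ?thesis by blast
qed




definition paths :: "'i set \<Rightarrow> ('i \<Rightarrow> 'i \<Rightarrow> real) \<Rightarrow> nat \<Rightarrow> 'i list set" where
  "paths I M k = {w. length w = Suc k \<and> set w \<subseteq> I \<and> (\<forall>i<k. M (w!i) (w!Suc i) = 1)}"

lemma paths_finite: "finite I \<Longrightarrow> finite (paths I M k)"
  by (rule finite_subset[OF _ finite_lists_length_eq[of I "Suc k"]]) (auto simp: paths_def)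

lemma paths_ne: "w \<in> paths I M k \<Longrightarrow> w \<noteq> []"
  by (auto simp: paths_def)

lemma paths_0: "paths I M 0 = (\<lambda>a. [a]) ` I"
proof (rule Set.set_eqI)
  fix w show "w \<in> paths I M 0 \<longleftrightarrow> w \<in> (\<lambda>a. [a]) ` I"
    by (cases w) (auto simp: paths_def)
qed

lemma last_nth_len: "length w = Suc k \<Longrightarrow> last w = w ! k"
  by (cases w rule: rev_exhaust) (auto simp: nth_append)

lemma hd_nth_len: "length w = Suc k \<Longrightarrow> hd w = w ! 0"
  by (cases w) auto

lemma paths_snoc: "w @ [b] \<in> paths I M (Suc k) \<longleftrightarrow> w \<in> paths I M k \<and> b \<in> I \<and> M (last w) b = 1"
proof
  assume h: "w @ [b] \<in> paths I M (Suc k)"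
  then have len: "length w = Suc k" by (simp add: paths_def)
  have "\<forall>i<k. M (w!i) (w!Suc i) = 1"
  proof (intro allI impI)
    fix i assume "i < k"
    then have "M ((w@[b])!i) ((w@[b])!Suc i) = 1" using h by (auto simp: paths_def)
    then show "M (w!i) (w!Suc i) = 1" using \<open>i<k\<close> len by (simp add: nth_append)
  qed
  moreover have "M ((w@[b])!k) ((w@[b])!Suc k) = 1" using h by (auto simp: paths_def)
  then have "M (last w) b = 1" using len by (simp add: nth_append last_nth_len)
  ultimately show "w \<in> paths I M k \<and> b \<in> I \<and> M (last w) b = 1" using h len by (auto simp: paths_def)
next
  assume h: "w \<in> paths I M k \<and> b \<in> I \<and> M (last w) b = 1"
  then have len: "length w = Suc k" by (simp add: paths_def)
  have "\<forall>i<Suc k. M ((w@[b])!i) ((w@[b])!Suc i) = 1"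
  proof (intro allI impI)
    fix i assume i: "i < Suc k"
    show "M ((w@[b])!i) ((w@[b])!Suc i) = 1"
    proof (cases "i < k")
      case True then show ?thesis using h len by (auto simp: paths_def nth_append)
    next
      case False then have "i = k" using i by auto
      then show ?thesis using h len by (simp add: nth_append last_nth_len)
    qed
  qed
  then show "w @ [b] \<in> paths I M (Suc k)" using h len by (auto simp: paths_def)
qed

lemma paths_Suc_cases:
  assumes "u \<in> paths I M (Suc k)" obtains w b where "u = w @ [b]"
  using assms by (cases u rule: rev_exhaust) (auto simp: paths_def)

lemma paths_count:
  assumes fin: "finite I" and zo: "zero_one_mat I M" and a: "a \<in> I"
  shows "b \<in> I \<Longrightarrow> real (card {w\<in>paths I M k. hd w = a \<and> last w = b}) = mpow I M k a b"
proof (induction k arbitrary: b)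
  case 0
  have "{w\<in>paths I M 0. hd w = a \<and> last w = b} = (if a = b then {[a]} else {})"
    using a unfolding paths_0 by auto
  then show ?case by simp
next
  case (Suc k)
  define S where "S = {c\<in>I. M c b = 1}"
  have eq: "{w\<in>paths I M (Suc k). hd w = a \<and> last w = b}
        = (\<Union>c\<in>S. (\<lambda>w. w @ [b]) ` {w\<in>paths I M k. hd w = a \<and> last w = c})"
  proof (rule Set.set_eqI, rule iffI)
    fix u assume u: "u \<in> {w\<in>paths I M (Suc k). hd w = a \<and> last w = b}"
    then have u1: "u \<in> paths I M (Suc k)" and u2: "hd u = a" and u3: "last u = b" by simp_all
    obtain w c where wc: "u = w @ [c]" using paths_Suc_cases[OF u1] by blast
    have cb: "c = b" using u3 wc by simp
    have w: "w \<in> paths I M k" "M (last w) b = 1" using u1 paths_snoc[of w b I M k] unfolding wc cb by blast+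
    have wne: "w \<noteq> []" using paths_ne[OF w(1)] .
    have hw: "hd w = a" using u2 wne unfolding wc by simp
    have lw: "last w \<in> I" using w(1) wne by (auto simp: paths_def)
    have "last w \<in> S" using lw w(2) by (simp add: S_def)
    moreover have "u \<in> (\<lambda>w'. w' @ [b]) ` {w'\<in>paths I M k. hd w' = a \<and> last w' = last w}"
      using w(1) hw unfolding wc cb by (intro image_eqI[of _ _ w]) simp_all
    ultimately show "u \<in> (\<Union>c\<in>S. (\<lambda>w. w @ [b]) ` {w\<in>paths I M k. hd w = a \<and> last w = c})"
      by (rule UN_I)
  next
    fix u assume "u \<in> (\<Union>c\<in>S. (\<lambda>w. w @ [b]) ` {w\<in>paths I M k. hd w = a \<and> last w = c})"
    then obtain c where c: "c \<in> S" and "u \<in> (\<lambda>w. w @ [b]) ` {w\<in>paths I M k. hd w = a \<and> last w = c}"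
      by (rule UN_E)
    then obtain w where w: "w \<in> paths I M k" "hd w = a" "last w = c" and u: "u = w @ [b]"
      by auto
    have wne: "w \<noteq> []" using paths_ne[OF w(1)] .
    have "u \<in> paths I M (Suc k)" using paths_snoc[of w b I M k] w c Suc.prems unfolding S_def u by simp
    moreover have "hd u = a" "last u = b" using wne w unfolding u by simp_all
    ultimately show "u \<in> {w\<in>paths I M (Suc k). hd w = a \<and> last w = b}" by simp
  qed
  have finS: "finite S" using fin by (simp add: S_def)
  have "card {w\<in>paths I M (Suc k). hd w = a \<and> last w = b}
      = (\<Sum>c\<in>S. card ((\<lambda>w. w @ [b]) ` {w\<in>paths I M k. hd w = a \<and> last w = c}))"
    unfolding eq
  proof (rule card_UN_disjoint[OF finS])
    show "\<forall>c\<in>S. finite ((\<lambda>w. w @ [b]) ` {w\<in>paths I M k. hd w = a \<and> last w = c})"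
      using paths_finite[OF fin, of M k] by auto
    show "\<forall>c\<in>S. \<forall>c'\<in>S. c \<noteq> c' \<longrightarrow> (\<lambda>w. w @ [b]) ` {w\<in>paths I M k. hd w = a \<and> last w = c} \<inter>
            (\<lambda>w. w @ [b]) ` {w\<in>paths I M k. hd w = a \<and> last w = c'} = {}"
      by auto
  qed
  also have "\<dots> = (\<Sum>c\<in>S. card {w\<in>paths I M k. hd w = a \<and> last w = c})"
  proof (rule sum.cong[OF refl], rule card_image)
    fix c show "inj_on (\<lambda>w. w @ [b]) {w\<in>paths I M k. hd w = a \<and> last w = c}"
      by (rule inj_onI) simp
  qed
  finally have "real (card {w\<in>paths I M (Suc k). hd w = a \<and> last w = b})
      = (\<Sum>c\<in>S. real (card {w\<in>paths I M k. hd w = a \<and> last w = c}))"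
    by simp
  also have "\<dots> = (\<Sum>c\<in>S. mpow I M k a c)"
    by (rule sum.cong[OF refl], rule Suc.IH) (simp add: S_def)
  also have "\<dots> = (\<Sum>c\<in>I. if M c b = 1 then mpow I M k a c else 0)"
    unfolding S_def using fin by (simp add: sum.inter_filter)
  also have "\<dots> = (\<Sum>c\<in>I. mpow I M k a c * M c b)"
    using zo Suc.prems unfolding zero_one_mat_def by (intro sum.cong) auto
  finally show ?case by simp
qed

lemma paths_count_hd:
  assumes fin: "finite I" and zo: "zero_one_mat I M" and a: "a \<in> I"
  shows "real (card {w\<in>paths I M k. hd w = a}) = (\<Sum>b\<in>I. mpow I M k a b)"
proof -
  have eq: "{w\<in>paths I M k. hd w = a} = (\<Union>b\<in>I. {w\<in>paths I M k. hd w = a \<and> last w = b})"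
    by (auto simp: paths_def) (metis last_in_set list.size(3) nat.distinct(1) subset_code(1))
  have "card {w\<in>paths I M k. hd w = a} = (\<Sum>b\<in>I. card {w\<in>paths I M k. hd w = a \<and> last w = b})"
    unfolding eq using fin paths_finite[OF fin] by (intro card_UN_disjoint) auto
  then show ?thesis using paths_count[OF fin zo a] by simp
qed

lemma paths_count_all:
  assumes fin: "finite I" and zo: "zero_one_mat I M"
  shows "real (card (paths I M k)) = (\<Sum>a\<in>I. \<Sum>b\<in>I. mpow I M k a b)"
proof -
  have eq: "paths I M k = (\<Union>a\<in>I. {w\<in>paths I M k. hd w = a})"
    by (auto simp: paths_def) (metis hd_in_set list.size(3) nat.distinct(1) subset_code(1))
  have "card (paths I M k) = (\<Sum>a\<in>I. card {w\<in>paths I M k. hd w = a})"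
    by (subst eq, intro card_UN_disjoint) (use fin paths_finite[OF fin] in auto)
  then show ?thesis using paths_count_hd[OF fin zo] by simp
qed

lemma lang_sft_sub: "lang (sft I M) (Suc k) \<subseteq> paths I M k"
proof
  fix w assume "w \<in> lang (sft I M) (Suc k)"
  then obtain x j where x: "x \<in> sft I M" and w: "w = map x [j..<j + Suc k]" unfolding lang_def by auto
  have wi: "\<And>i. i < Suc k \<Longrightarrow> w!i = x (j+i)" using w by (simp add: nth_map_upt del: upt_Suc)
  have "\<forall>i<k. M (w!i) (w!Suc i) = 1"
  proof (intro allI impI)
    fix i assume "i < k"
    then have "w!i = x (j+i)" "w!Suc i = x (Suc (j+i))" using wi by auto
    then show "M (w!i) (w!Suc i) = 1" using x unfolding sft_def by simp
  qed
  moreover have "set w \<subseteq> I" using x unfolding w sft_def by auto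
  ultimately show "w \<in> paths I M k" using w by (auto simp: paths_def)
qed

definition good :: "'i set \<Rightarrow> ('i \<Rightarrow> 'i \<Rightarrow> real) \<Rightarrow> 'i \<Rightarrow> bool" where
  "good I M j \<longleftrightarrow> (\<forall>k. \<exists>w\<in>paths I M k. hd w = j)"

lemma paths_take: "w \<in> paths I M (k + l) \<Longrightarrow> take (Suc k) w \<in> paths I M k"
  by (auto simp: paths_def dest: in_set_takeD)

lemma paths_drop: "w \<in> paths I M (k + l) \<Longrightarrow> drop k w \<in> paths I M l"
  by (auto simp: paths_def dest: in_set_dropD)

lemma hd_drop_paths: "w \<in> paths I M (k + l) \<Longrightarrow> hd (drop k w) = w ! k"
  by (simp add: paths_def hd_drop_conv_nth)

lemma paths_mono:
  assumes "w \<in> paths I M k" "k' \<le> k" shows "take (Suc k') w \<in> paths I M k'" "hd (take (Suc k') w) = hd w"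
proof -
  obtain l where "k = k' + l" using assms(2) le_Suc_ex by blast
  then show "take (Suc k') w \<in> paths I M k'" using paths_take assms(1) by blast
  show "hd (take (Suc k') w) = hd w" using paths_ne[OF assms(1)] by (cases w) auto
qed

lemma bad_bound:
  assumes fin: "finite I"
  shows "\<exists>K. \<forall>j\<in>I. \<not> good I M j \<longrightarrow> \<not> (\<exists>w\<in>paths I M K. hd w = j)"
proof -
  define Bd where "Bd = {j\<in>I. \<not> good I M j}"
  have "\<forall>j\<in>Bd. \<exists>k. \<not> (\<exists>w\<in>paths I M k. hd w = j)" unfolding Bd_def good_def by auto
  then obtain f where f: "\<And>j. j \<in> Bd \<Longrightarrow> \<not> (\<exists>w\<in>paths I M (f j). hd w = j)" by metis
  define K where "K = (\<Sum>j\<in>Bd. f j)"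
  have "\<forall>j\<in>I. \<not> good I M j \<longrightarrow> \<not> (\<exists>w\<in>paths I M K. hd w = j)"
  proof (intro ballI impI notI)
    fix j assume j: "j \<in> I" "\<not> good I M j" and "\<exists>w\<in>paths I M K. hd w = j"
    then obtain w where w: "w \<in> paths I M K" "hd w = j" by auto
    have jB: "j \<in> Bd" using j by (auto simp: Bd_def)
    have "f j \<le> K" unfolding K_def using fin jB by (intro member_le_sum) (auto simp: Bd_def)
    from paths_mono[OF w(1) this] w(2) f[OF jB] show False by auto
  qed
  then show ?thesis by blast
qed

lemma good_succ:
  assumes fin: "finite I" and g: "good I M j"
  shows "\<exists>j'\<in>I. M j j' = 1 \<and> good I M j'"
proof -
  obtain K where K: "\<forall>j\<in>I. \<not> good I M j \<longrightarrow> \<not> (\<exists>w\<in>paths I M K. hd w = j)"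
    using bad_bound[OF fin] by blast
  obtain w where w: "w \<in> paths I M (1 + K)" "hd w = j" using g unfolding good_def by blast
  have len: "length w = Suc (Suc K)" using w by (simp add: paths_def)
  have "M (w!0) (w!1) = 1" using w(1) by (auto simp: paths_def)
  moreover have "w!0 = j" using w(2) hd_nth_len[OF len] by simp
  moreover have "w!1 \<in> I" using w(1) len by (auto simp: paths_def)
  moreover have "good I M (w!1)"
  proof -
    have "drop 1 w \<in> paths I M K" using paths_drop[where w=w and k=1 and l=K] w(1) by simp
    moreover have "hd (drop 1 w) = w!1" using hd_drop_paths[where w=w and k=1 and l=K] w(1) by simp
    ultimately show "good I M (w!1)" using K \<open>w!1 \<in> I\<close> by blast
  qed
  ultimately show ?thesis by (intro bexI[of _ "w!1"]) auto
qed

lemma good_in: "good I M j \<Longrightarrow> j \<in> I"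
  unfolding good_def using paths_0[of I M] by (metis (no_types, lifting) imageE list.sel(1))

lemma good_seq:
  assumes fin: "finite I" and g: "good I M j"
  shows "\<exists>x\<in>sft I M. x 0 = j"
proof -
  define nx where "nx = (\<lambda>y. SOME y'. y' \<in> I \<and> M y y' = 1 \<and> good I M y')"
  have nx: "nx y \<in> I \<and> M y (nx y) = 1 \<and> good I M (nx y)" if gy: "good I M y" for y
  proof -
    have "\<exists>y'. y' \<in> I \<and> M y y' = 1 \<and> good I M y'" using good_succ[OF fin gy] by blast
    then show ?thesis unfolding nx_def by (rule someI_ex)
  qed
  define x where "x = (\<lambda>n. (nx ^^ n) j)"
  have gx: "good I M (x n)" for n by (induction n) (auto simp: x_def g nx)
  have xI: "x n \<in> I" for n using good_in[OF gx[of n]] .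
  have xs: "x (Suc n) = nx (x n)" for n by (simp add: x_def)
  have "x \<in> sft I M" unfolding sft_def using xI xs nx[OF gx] by auto
  moreover have "x 0 = j" by (simp add: x_def)
  ultimately show ?thesis by blast
qed

lemma lang_sft_sup:
  assumes fin: "finite I" and w: "w \<in> paths I M k" and g: "good I M (last w)"
  shows "w \<in> lang (sft I M) (Suc k)"
proof -
  obtain y where y: "y \<in> sft I M" "y 0 = last w" using good_seq[OF fin g] by blast
  have len: "length w = Suc k" using w by (simp add: paths_def)
  define x where "x = (\<lambda>n. if n \<le> k then w!n else y (n - k))"
  have "x \<in> sft I M"
    unfolding sft_def
  proof (intro CollectI conjI allI)
    fix n
    show "x n \<in> I" using w y len unfolding x_def sft_def paths_def by auto
    show "M (x n) (x (Suc n)) = 1"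
    proof (cases "n < k")
      case True then show ?thesis using w unfolding x_def paths_def by auto
    next
      case False
      show ?thesis
      proof (cases "n = k")
        case True
        then have "x n = y 0" "x (Suc n) = y 1" using y len by (auto simp: x_def last_nth_len)
        then show ?thesis using y(1) unfolding sft_def by auto
      next
        case False
        then have "n > k" using \<open>\<not> n < k\<close> by auto
        then have "x n = y (n - k)" "x (Suc n) = y (Suc (n - k))" by (auto simp: x_def Suc_diff_le)
        then show ?thesis using y(1) unfolding sft_def by auto
      qed
    qed
  qed
  moreover have "w = map x [0..<0 + Suc k]"
    using len by (intro nth_equalityI) (auto simp: x_def nth_map_upt simp del: upt_Suc)
  ultimately show ?thesis unfolding lang_def using len by blast
qed

lemma lang_sft_card_lower:
  assumes fin: "finite I"
  shows "\<exists>K. \<forall>k. card (paths I M (k + K)) \<le> card (lang (sft I M) (Suc k)) * card I ^ K"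
proof -
  obtain K where K: "\<forall>j\<in>I. \<not> good I M j \<longrightarrow> \<not> (\<exists>w\<in>paths I M K. hd w = j)"
    using bad_bound[OF fin] by blast
  have "card (paths I M (k + K)) \<le> card (lang (sft I M) (Suc k)) * card I ^ K" for k
  proof -
    define F where "F = (\<lambda>w::'a list. (take (Suc k) w, drop (Suc k) w))"
    have inj: "inj_on F (paths I M (k + K))" unfolding F_def inj_on_def
      by (metis append_take_drop_id prod.inject)
    have sub: "F ` paths I M (k + K) \<subseteq> lang (sft I M) (Suc k) \<times> {xs. set xs \<subseteq> I \<and> length xs = K}"
    proof
      fix p assume "p \<in> F ` paths I M (k + K)"
      then obtain w where w: "w \<in> paths I M (k + K)" and p: "p = F w" by auto
      have len: "length w = Suc (k + K)" using w by (simp add: paths_def)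
      have tk: "take (Suc k) w \<in> paths I M k" using paths_take[OF w] .
      have lt: "last (take (Suc k) w) = w ! k" using len by (subst last_nth_len[of _ k]) auto
      have "w ! k \<in> I" using w len by (auto simp: paths_def)
      then have "good I M (w ! k)" using K paths_drop[OF w] hd_drop_paths[OF w] by metis
      then have "take (Suc k) w \<in> lang (sft I M) (Suc k)" using lang_sft_sup[OF fin tk] lt by simp
      moreover have "drop (Suc k) w \<in> {xs. set xs \<subseteq> I \<and> length xs = K}"
        using w len by (auto simp: paths_def dest: in_set_dropD)
      ultimately show "p \<in> lang (sft I M) (Suc k) \<times> {xs. set xs \<subseteq> I \<and> length xs = K}"
        by (simp add: p F_def)
    qed
    have finL: "finite (lang (sft I M) (Suc k))"
      using finite_subset[OF lang_sft_sub paths_finite[OF fin]] .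
    have "card (paths I M (k + K)) = card (F ` paths I M (k + K))" using card_image[OF inj] by simp
    also have "\<dots> \<le> card (lang (sft I M) (Suc k) \<times> {xs. set xs \<subseteq> I \<and> length xs = K})"
      by (intro card_mono finite_cartesian_product finL finite_lists_length_eq fin sub)
    also have "\<dots> = card (lang (sft I M) (Suc k)) * card I ^ K"
      by (simp add: card_cartesian_product card_lists_length_eq fin)
    finally show ?thesis .
  qed
  then show ?thesis by blast
qed

lemma growth_lim:
  fixes f :: "nat \<Rightarrow> real"
  assumes rho: "\<rho> > 0"
    and lo: "\<exists>c>0. \<forall>\<^sub>F n in sequentially. f n \<ge> c * \<rho> ^ n"
    and up: "\<And>r. r > \<rho> \<Longrightarrow> \<exists>C. \<forall>\<^sub>F n in sequentially. f n \<le> C * r ^ n"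
  shows "(\<lambda>n. ln (f n) / real n) \<longlonglongrightarrow> ln \<rho>"
proof (rule order_tendstoI)
  have z: "(\<lambda>n. C / real n) \<longlonglongrightarrow> 0" for C :: real
    by (intro tendsto_divide_0[OF tendsto_const] filterlim_at_top_imp_at_infinity filterlim_real_sequentially)
  obtain c where c: "c > 0" and cl: "\<forall>\<^sub>F n in sequentially. f n \<ge> c * \<rho> ^ n" using lo by blast
  fix a
  {
    assume a: "a < ln \<rho>"
    have e1: "\<forall>\<^sub>F n in sequentially. ln c / real n > a - ln \<rho>"
      using order_tendstoD(1)[OF z[of "ln c"]] a by simp
    show "\<forall>\<^sub>F n in sequentially. a < ln (f n) / real n"
      using eventually_conj[OF eventually_conj[OF e1 cl] eventually_gt_at_top[of 0]]
    proof (rule eventually_mono)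
      fix n assume h: "(ln c / real n > a - ln \<rho> \<and> f n \<ge> c * \<rho> ^ n) \<and> 0 < n"
      then have pos: "c * \<rho> ^ n > 0" using c rho by simp
      have "ln (c * \<rho> ^ n) \<le> ln (f n)" using h pos by (subst ln_le_cancel_iff) auto
      then have "ln c + real n * ln \<rho> \<le> ln (f n)" using c rho by (simp add: ln_mult ln_realpow)
      then have "(ln c + real n * ln \<rho>) / real n \<le> ln (f n) / real n" using h by (intro divide_right_mono) auto
      then have "ln c / real n + ln \<rho> \<le> ln (f n) / real n" using h by (simp add: add_divide_distrib)
      then show "a < ln (f n) / real n" using h by linarith
    qed
  }
  {
    assume a: "a > ln \<rho>"
    define r where "r = exp ((ln \<rho> + a) / 2)"
    have r0: "r > 0" and lr: "ln r = (ln \<rho> + a) / 2" by (auto simp: r_def)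
    have "ln \<rho> < (ln \<rho> + a) / 2" using a by simp
    then have "exp (ln \<rho>) < r" unfolding r_def by simp
    then have rr: "r > \<rho>" using rho by simp
    obtain C where C: "\<forall>\<^sub>F n in sequentially. f n \<le> C * r ^ n" using up[OF rr] by blast
    define C' where "C' = max C 1"
    have e1: "\<forall>\<^sub>F n in sequentially. ln C' / real n < a - ln r"
      using order_tendstoD(2)[OF z[of "ln C'"]] a lr by simp
    show "\<forall>\<^sub>F n in sequentially. ln (f n) / real n < a"
      using eventually_conj[OF eventually_conj[OF e1 C] eventually_conj[OF cl eventually_gt_at_top[of 0]]]
    proof (rule eventually_mono)
      fix n assume h: "(ln C' / real n < a - ln r \<and> f n \<le> C * r ^ n) \<and> f n \<ge> c * \<rho> ^ n \<and> 0 < n"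
      have "c * \<rho> ^ n > 0" using c rho by simp
      then have fpos: "f n > 0" using h by linarith
      have "C * r ^ n \<le> C' * r ^ n" using r0 by (intro mult_right_mono) (auto simp: C'_def)
      then have "f n \<le> C' * r ^ n" using h by linarith
      then have "ln (f n) \<le> ln (C' * r ^ n)" using fpos by (subst ln_le_cancel_iff) (auto simp: C'_def r0)
      moreover have "ln (C' * r ^ n) = ln C' + real n * ln r"
        using r0 by (subst ln_mult) (auto simp: C'_def ln_realpow)
      ultimately have "ln (f n) \<le> ln C' + real n * ln r" by linarith
      then have "ln (f n) / real n \<le> (ln C' + real n * ln r) / real n" using h by (intro divide_right_mono) auto
      then have "ln (f n) / real n \<le> ln C' / real n + ln r" using h by (simp add: add_divide_distrib)
      then show "ln (f n) / real n < a" using h by linarith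
    qed
  }
qed




lemma zo_nonneg: "zero_one_mat I M \<Longrightarrow> \<forall>i\<in>I. \<forall>j\<in>I. M i j \<ge> 0"
  unfolding zero_one_mat_def by force

lemma paths_lower:
  assumes fin: "finite I" and ne: "I \<noteq> {}" and zo: "zero_one_mat I M"
  shows "\<exists>i0\<in>I. \<forall>k. real (card (paths I M k)) \<ge> spec_rad I M ^ k"
proof -
  obtain i0 where i0: "i0 \<in> I" and r: "\<forall>k. (\<Sum>j\<in>I. mpow I M k i0 j) \<ge> spec_rad I M ^ k"
    using rowsum_lower[OF fin ne zo_nonneg[OF zo]] by blast
  have "real (card (paths I M k)) \<ge> spec_rad I M ^ k" for k
  proof -
    have "real (card {w\<in>paths I M k. hd w = i0}) \<le> real (card (paths I M k))"
      using paths_finite[OF fin] by (intro of_nat_mono card_mono) auto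
    moreover have "spec_rad I M ^ k \<le> (\<Sum>j\<in>I. mpow I M k i0 j)" using r by blast
    ultimately show ?thesis using paths_count_hd[OF fin zo i0, of k] by linarith
  qed
  with i0 show ?thesis by blast
qed

lemma paths_upper:
  assumes fin: "finite I" and ne: "I \<noteq> {}" and zo: "zero_one_mat I M" and r: "spec_rad I M < r"
  shows "\<exists>C. \<forall>k. real (card (paths I M k)) \<le> C * r ^ k"
proof -
  obtain C where C: "\<forall>k. \<forall>i\<in>I. \<forall>j\<in>I. \<bar>mpow I M k i j\<bar> \<le> C * r ^ k"
    using gelfand[OF fin ne r] by blast
  have "real (card (paths I M k)) \<le> (real (card I) * real (card I) * C) * r ^ k" for k
  proof -
    have "real (card (paths I M k)) = (\<Sum>a\<in>I. \<Sum>b\<in>I. mpow I M k a b)" using paths_count_all[OF fin zo] .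
    also have "\<dots> \<le> (\<Sum>a\<in>I. \<Sum>b\<in>I. C * r ^ k)"
      using C by (intro sum_mono) (meson abs_le_D1)
    also have "\<dots> = (real (card I) * real (card I) * C) * r ^ k" by simp
    finally show ?thesis .
  qed
  then show ?thesis by blast
qed

lemma ev_Suc:
  assumes "\<And>k. P (Suc k)" shows "\<forall>\<^sub>F n in sequentially. P n"
  unfolding eventually_sequentially
proof (rule exI[of _ 1], intro allI impI)
  fix n :: nat assume "n \<ge> 1"
  then obtain k where "n = Suc k" by (cases n) auto
  then show "P n" using assms by simp
qed

lemma htop_sft:
  assumes fin: "finite I" and ne: "I \<noteq> {}" and zo: "zero_one_mat I M" and pos: "spec_rad I M > 0"
  shows "htop (sft I M) = ln (spec_rad I M)"
proof -
  define \<rho> where "\<rho> = spec_rad I M"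
  define f where "f = (\<lambda>n. real (card (lang (sft I M) n)))"
  have rho: "\<rho> > 0" using pos by (simp add: \<rho>_def)
  have finL: "finite (lang (sft I M) (Suc k))" for k
    using finite_subset[OF lang_sft_sub paths_finite[OF fin]] .
  obtain i0 where "i0 \<in> I" and pl: "\<forall>k. real (card (paths I M k)) \<ge> \<rho> ^ k"
    using paths_lower[OF fin ne zo] unfolding \<rho>_def by blast
  obtain K where K: "\<forall>k. card (paths I M (k + K)) \<le> card (lang (sft I M) (Suc k)) * card I ^ K"
    using lang_sft_card_lower[OF fin] by blast
  have cI: "real (card I) > 0" using fin ne by (simp add: card_gt_0_iff)
  define c where "c = \<rho> ^ K / (\<rho> * real (card I) ^ K)"
  have c0: "c > 0" using rho cI by (simp add: c_def)
  have lo: "\<forall>\<^sub>F n in sequentially. f n \<ge> c * \<rho> ^ n"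
  proof (rule ev_Suc)
    fix k
    have "\<rho> ^ (k + K) \<le> real (card (paths I M (k + K)))" using pl by blast
    also have "\<dots> \<le> f (Suc k) * real (card I) ^ K"
      using K unfolding f_def by (metis of_nat_le_iff of_nat_mult of_nat_power)
    finally have "\<rho> ^ (k + K) / real (card I) ^ K \<le> f (Suc k)"
      using cI by (simp add: divide_le_eq)
    moreover have "c * \<rho> ^ Suc k = \<rho> ^ (k + K) / real (card I) ^ K"
      using rho by (simp add: c_def power_add field_simps)
    ultimately show "f (Suc k) \<ge> c * \<rho> ^ Suc k" by simp
  qed
  have up: "\<exists>C. \<forall>\<^sub>F n in sequentially. f n \<le> C * r ^ n" if r: "r > \<rho>" for r
  proof -
    obtain C where C: "\<forall>k. real (card (paths I M k)) \<le> C * r ^ k"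
      using paths_upper[OF fin ne zo, of r] r unfolding \<rho>_def by blast
    have r0: "r > 0" using r rho by simp
    have "\<forall>\<^sub>F n in sequentially. f n \<le> (C / r) * r ^ n"
    proof (rule ev_Suc)
      fix k
      have "f (Suc k) \<le> real (card (paths I M k))"
        unfolding f_def using lang_sft_sub paths_finite[OF fin] by (intro of_nat_mono card_mono) auto
      also have "\<dots> \<le> C * r ^ k" using C by blast
      also have "\<dots> = (C / r) * r ^ Suc k" using r0 by simp
      finally show "f (Suc k) \<le> (C / r) * r ^ Suc k" .
    qed
    then show ?thesis by blast
  qed
  have "(\<lambda>n. ln (f n) / real n) \<longlonglongrightarrow> ln \<rho>"
    by (rule growth_lim[OF rho]) (use c0 lo up in blast)+
  then show ?thesis unfolding htop_def f_def \<rho>_def by (rule limI)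
qed




abbreviation PM :: "(nat \<Rightarrow> nat) measure" where
  "PM \<equiv> PiM UNIV (\<lambda>_::nat. count_space (UNIV::nat set))"

lemma space_PM: "space PM = UNIV"
  by (simp add: space_PiM)

lemma coord_meas: "{x::nat\<Rightarrow>nat. P (x i)} \<in> sets PM"
proof -
  have "{x::nat\<Rightarrow>nat. P (x i)} = (\<lambda>x. x i) -` {a. P a} \<inter> space PM" by (auto simp: space_PM)
  moreover have "(\<lambda>x. x i) -` {a. P a} \<inter> space PM \<in> sets PM"
    by (rule measurable_sets[OF measurable_component_singleton]) auto
  ultimately show ?thesis by simp
qed

lemma pair_meas: "{x::nat\<Rightarrow>nat. Q (x i) (x j)} \<in> sets PM"
proof -
  have "{x::nat\<Rightarrow>nat. Q (x i) (x j)} = (\<Union>a. {x. x i = a} \<inter> {x. Q a (x j)})" by auto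
  moreover have "(\<Union>a. {x::nat\<Rightarrow>nat. x i = a} \<inter> {x. Q a (x j)}) \<in> sets PM"
    using coord_meas by (intro sets.countable_UN sets.Int) auto
  ultimately show ?thesis by simp
qed

lemma sft_meas: "sft I A \<in> sets PM"
proof -
  have "sft I A = (\<Inter>n. {x. x n \<in> I} \<inter> {x. A (x n) (x (Suc n)) = 1})" by (auto simp: sft_def)
  moreover have "(\<Inter>n. {x::nat\<Rightarrow>nat. x n \<in> I} \<inter> {x. A (x n) (x (Suc n)) = 1}) \<in> sets PM"
    using coord_meas pair_meas by (intro sets.countable_INT sets.Int) auto
  ultimately show ?thesis by simp
qed

lemma cyl_meas: "cyl (sft I A) w \<in> sets PM"
proof -
  have "cyl (sft I A) w = sft I A \<inter> (\<Inter>i. {x. i < length w \<longrightarrow> x i = w ! i})" by (auto simp: cyl_def)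
  moreover have "sft I A \<inter> (\<Inter>i. {x::nat\<Rightarrow>nat. i < length w \<longrightarrow> x i = w ! i}) \<in> sets PM"
    using coord_meas sft_meas by (intro sets.Int sets.countable_INT) auto
  ultimately show ?thesis by simp
qed

lemma shiftn_sft: "x \<in> sft I A \<Longrightarrow> shiftn i x \<in> sft I A"
  by (auto simp: sft_def shiftn_def)

lemma surv_meas:
  assumes "finite G" "G \<noteq> {}"
  shows "survivors (sft I A) G m \<in> sets PM"
proof -
  have "survivors (sft I A) G m = sft I A \<inter> (\<Inter>i\<in>{..m}. \<Inter>w\<in>G. space PM - (\<Inter>j. {x. j < length w \<longrightarrow> x (j + i) = w ! j}))"
    unfolding survivors_def hole_def cyl_def using shiftn_sft[unfolded shiftn_def, of _ I A]
    by (auto simp: shiftn_def space_PM) blast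
  moreover have "sft I A \<inter> (\<Inter>i\<in>{..m}. \<Inter>w\<in>G. space PM - (\<Inter>j. {x::nat\<Rightarrow>nat. j < length w \<longrightarrow> x (j + i) = w ! j})) \<in> sets PM"
  proof -
    have a: "(\<Inter>j. {x::nat\<Rightarrow>nat. j < length w \<longrightarrow> x (j + i) = w ! j}) \<in> sets PM" for i w
      by (rule sets.countable_INT) (auto intro: coord_meas)
    have b: "(\<Inter>w\<in>G. space PM - (\<Inter>j. {x::nat\<Rightarrow>nat. j < length w \<longrightarrow> x (j + i) = w ! j})) \<in> sets PM" for i
      by (rule sets.finite_INT) (use assms a in auto)
    have "(\<Inter>i\<in>{..m}. \<Inter>w\<in>G. space PM - (\<Inter>j. {x::nat\<Rightarrow>nat. j < length w \<longrightarrow> x (j + i) = w ! j})) \<in> sets PM"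
      by (rule sets.finite_INT) (use b in auto)
    then show ?thesis using sft_meas by (rule sets.Int[rotated])
  qed
  ultimately show ?thesis by simp
qed




lemma paths_mem: "w \<in> paths I M k \<Longrightarrow> i \<le> k \<Longrightarrow> w ! i \<in> I"
proof -
  assume w: "w \<in> paths I M k" and i: "i \<le> k"
  then have "set w \<subseteq> I" "i < length w" by (auto simp: paths_def)
  then show "w ! i \<in> I" using nth_mem[of i w] by blast
qed

lemma paths_last: "w \<in> paths I M k \<Longrightarrow> last w \<in> I"
  using paths_mem[of w I M k k] last_nth_len[of w k] by (simp add: paths_def)

lemma paths_hd: "w \<in> paths I M k \<Longrightarrow> hd w \<in> I"
  using paths_mem[of w I M k 0] hd_nth_len[of w k] by (simp add: paths_def)

locale cor32 =
  fixes N :: nat and A :: "nat \<Rightarrow> nat \<Rightarrow> real" and v p :: "nat \<Rightarrow> real"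
    and M :: "(nat \<Rightarrow> nat) measure" and G :: "nat list set"
  assumes N: "N \<ge> 1"
    and A01: "zero_one_mat {..<N} A"
    and Airr: "irreducible_mat {..<N} A"
    and vpos: "\<forall>i\<in>{..<N}. v i > 0"
    and veig: "\<forall>i\<in>{..<N}. (\<Sum>j\<in>{..<N}. A i j * v j) = spec_rad {..<N} A * v i"
    and pnonneg: "\<forall>i\<in>{..<N}. p i \<ge> 0"
    and psum: "(\<Sum>i\<in>{..<N}. p i) = 1"
    and pstat: "\<forall>j\<in>{..<N}. (\<Sum>i\<in>{..<N}. p i * (A i j * v j / (spec_rad {..<N} A * v i))) = p j"
    and Mprob: "prob_space M"
    and Msets: "sets M = sets PM"
    and Mcyl: "\<forall>n\<ge>1. \<forall>w\<in>lang (sft {..<N} A) n.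
                 measure M (cyl (sft {..<N} A) w) = p (w ! 0) * (\<Prod>i<n - 1. A (w ! i) (w ! (i + 1)) * v (w ! (i + 1)) / (spec_rad {..<N} A * v (w ! i)))"
    and Gfin: "finite G" and Gne: "G \<noteq> {}"
    and Gwords: "\<forall>w\<in>G. w \<noteq> [] \<and> w \<in> lang (sft {..<N} A) (length w)"
begin

abbreviation "Sym \<equiv> {..<N}"
abbreviation "XA \<equiv> sft Sym A"
abbreviation "lam \<equiv> spec_rad Sym A"

lemma finSym: "finite Sym" by simp
lemma neSym: "Sym \<noteq> {}"
proof -
  have "0 \<in> Sym" using N by simp
  then show ?thesis by blast
qed

lemma A_nn: "\<forall>i\<in>Sym. \<forall>j\<in>Sym. A i j \<ge> 0"
  using zo_nonneg[OF A01] .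

lemma vpos': "i \<in> Sym \<Longrightarrow> v i > 0" using vpos by blast
lemma pnn': "i \<in> Sym \<Longrightarrow> p i \<ge> 0" using pnonneg by blast
lemma Ann': "i \<in> Sym \<Longrightarrow> j \<in> Sym \<Longrightarrow> A i j \<ge> 0" using A_nn by blast

lemma A_cases: "i \<in> Sym \<Longrightarrow> j \<in> Sym \<Longrightarrow> A i j = 0 \<or> A i j = 1"
  using A01 unfolding zero_one_mat_def by blast

lemma lam_pos: "lam > 0"
proof -
  have l0: "lam \<ge> 0" using spec_rad_nonneg[OF finSym neSym] .
  show ?thesis
  proof (rule ccontr)
    assume "\<not> lam > 0"
    then have l: "lam = 0" using l0 by simp
    have Az: "A i j = 0" if "i \<in> Sym" "j \<in> Sym" for i j
    proof -
      have "(\<Sum>j\<in>Sym. A i j * v j) = 0" using veig[rule_format, OF that(1)] l by simp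
      moreover have "\<forall>j\<in>Sym. A i j * v j \<ge> 0" using A_nn vpos that by (simp add: less_imp_le)
      ultimately have "\<forall>j\<in>Sym. A i j * v j = 0" using sum_nonneg_eq_0_iff[OF finSym, of "\<lambda>j. A i j * v j"] by blast
      then have "A i j * v j = 0" using that by blast
      moreover have "v j > 0" using vpos that(2) by blast
      ultimately show ?thesis by simp
    qed
    have mz: "mpow Sym A (Suc n) i j = 0" if "j \<in> Sym" for n i j
    proof -
      have "(\<Sum>k\<in>Sym. mpow Sym A n i k * A k j) = 0" by (rule sum.neutral) (use Az that in auto)
      then show ?thesis by simp
    qed
    have z: "(0::nat) \<in> Sym" using N by simp
    obtain n where n: "n > 0" "mpow Sym A n 0 0 > 0"
      using Airr[unfolded irreducible_mat_def, rule_format, OF z z] by blast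
    then obtain m where "n = Suc m" using gr0_implies_Suc by blast
    then show False using n mz[OF z, of m 0] by simp
  qed
qed

lemma succ: "i \<in> Sym \<Longrightarrow> \<exists>j\<in>Sym. A i j = 1"
proof (rule ccontr)
  assume i: "i \<in> Sym" and h: "\<not> (\<exists>j\<in>Sym. A i j = 1)"
  then have "\<forall>j\<in>Sym. A i j = 0" using A_cases by blast
  then have "(\<Sum>j\<in>Sym. A i j * v j) = 0" by (intro sum.neutral) simp
  moreover have "lam * v i > 0" using lam_pos vpos i by simp
  ultimately show False using veig[rule_format, OF i] by linarith
qed

lemma goodA: "j \<in> Sym \<Longrightarrow> good Sym A j"
  unfolding good_def
proof
  fix k assume j: "j \<in> Sym"
  show "\<exists>w\<in>paths Sym A k. hd w = j"
  proof (induction k)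
    case 0 show ?case using j by (intro bexI[of _ "[j]"]) (auto simp: paths_0)
  next
    case (Suc k)
    then obtain w where w: "w \<in> paths Sym A k" "hd w = j" by blast
    have "last w \<in> Sym" using paths_last[OF w(1)] .
    then obtain b where b: "b \<in> Sym" "A (last w) b = 1" using succ by blast
    have "w @ [b] \<in> paths Sym A (Suc k)" using paths_snoc[of w b Sym A k] w b by simp
    moreover have "hd (w @ [b]) = j" using w paths_ne[OF w(1)] by simp
    ultimately show ?case by blast
  qed
qed

lemma langXA: "lang XA (Suc k) = paths Sym A k"
proof
  show "lang XA (Suc k) \<subseteq> paths Sym A k" by (rule lang_sft_sub)
  show "paths Sym A k \<subseteq> lang XA (Suc k)"
  proof
    fix w assume w: "w \<in> paths Sym A k"
    have "last w \<in> Sym" using paths_last[OF w] .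
    then show "w \<in> lang XA (Suc k)" using lang_sft_sup[OF finSym w goodA] by blast
  qed
qed

lemma XA_ne: "XA \<noteq> {}"
  using good_seq[OF finSym goodA[of 0]] N by auto

lemma p_pos: "i \<in> Sym \<Longrightarrow> p i > 0"
proof (rule ccontr)
  assume i: "i \<in> Sym" and "\<not> p i > 0"
  then have pi0: "p i = 0" using pnonneg by force
  define Z where "Z = {j\<in>Sym. p j = 0}"
  have Az: "A l j = 0" if l: "l \<in> Sym" "l \<notin> Z" and j: "j \<in> Z" for l j
  proof -
    have jS: "j \<in> Sym" and pj: "p j = 0" using j by (auto simp: Z_def)
    have nn: "\<forall>i\<in>Sym. p i * (A i j * v j / (lam * v i)) \<ge> 0"
    proof
      fix i assume i: "i \<in> Sym"
      have "A i j * v j \<ge> 0" using Ann'[OF i jS] vpos'[OF jS] by simp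
      moreover have "lam * v i > 0" using lam_pos vpos'[OF i] by simp
      ultimately show "p i * (A i j * v j / (lam * v i)) \<ge> 0" using pnn'[OF i] by simp
    qed
    have "(\<Sum>i\<in>Sym. p i * (A i j * v j / (lam * v i))) = 0" using pstat jS pj by simp
    then have "\<forall>i\<in>Sym. p i * (A i j * v j / (lam * v i)) = 0"
      using sum_nonneg_eq_0_iff[OF finSym, of "\<lambda>i. p i * (A i j * v j / (lam * v i))"] nn by blast
    then have "p l * (A l j * v j / (lam * v l)) = 0" using l(1) by blast
    moreover have "p l > 0" using l pnonneg by (force simp: Z_def)
    ultimately show ?thesis using vpos'[OF l(1)] vpos'[OF jS] lam_pos by simp
  qed
  have mz: "\<forall>k\<in>Sym - Z. \<forall>j\<in>Z. mpow Sym A n k j = 0" for n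
  proof (induction n)
    case 0 then show ?case by auto
  next
    case (Suc n)
    show ?case
    proof (intro ballI)
      fix k j assume k: "k \<in> Sym - Z" and j: "j \<in> Z"
      have "mpow Sym A n k l * A l j = 0" if "l \<in> Sym" for l
        using Suc k j Az that by (cases "l \<in> Z") auto
      then have "(\<Sum>l\<in>Sym. mpow Sym A n k l * A l j) = 0" by (intro sum.neutral) blast
      then show "mpow Sym A (Suc n) k j = 0" by simp
    qed
  qed
  have "\<exists>k\<in>Sym. p k > 0"
  proof (rule ccontr)
    assume "\<not> ?thesis"
    then have "\<forall>k\<in>Sym. p k = 0" using pnonneg by force
    then show False using psum by simp
  qed
  then obtain k where k: "k \<in> Sym" "p k > 0" by blast
  obtain n where "n > 0" "mpow Sym A n k i > 0" using Airr k i unfolding irreducible_mat_def by blast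
  moreover have "k \<in> Sym - Z" "i \<in> Z" using k i pi0 by (auto simp: Z_def)
  ultimately show False using mz by fastforce
qed

lemma prod_tele:
  assumes "k < length u" "\<forall>i\<le>k. u ! i \<in> Sym" "\<forall>i<k. A (u ! i) (u ! (i+1)) = 1"
  shows "(\<Prod>i<k. A (u ! i) (u ! (i + 1)) * v (u ! (i + 1)) / (lam * v (u ! i))) = v (u ! k) / (v (u ! 0) * lam ^ k)"
  using assms
proof (induction k)
  case 0
  have "u ! 0 \<in> Sym" using 0 by blast
  then show ?case using vpos'[of "u ! 0"] by simp
next
  case (Suc k)
  have IH: "(\<Prod>i<k. A (u ! i) (u ! (i + 1)) * v (u ! (i + 1)) / (lam * v (u ! i))) = v (u ! k) / (v (u ! 0) * lam ^ k)"
    using Suc by auto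
  have vk: "v (u ! k) > 0" "v (u ! 0) > 0" using Suc.prems vpos by auto
  have "A (u ! k) (u ! (k+1)) = 1" using Suc.prems by auto
  then show ?case using IH vk lam_pos by (simp add: field_simps)
qed

lemma cyl_measure:
  assumes u: "u \<in> lang XA (Suc k)"
  shows "measure M (cyl XA u) = p (u ! 0) * v (last u) / (v (u ! 0) * lam ^ k)"
proof -
  have up: "u \<in> paths Sym A k" using u langXA by simp
  have len: "length u = Suc k" using up by (simp add: paths_def)
  have "measure M (cyl XA u) = p (u ! 0) * (\<Prod>i<k. A (u ! i) (u ! (i + 1)) * v (u ! (i + 1)) / (lam * v (u ! i)))"
    using Mcyl u by force
  also have "\<dots> = p (u ! 0) * (v (u ! k) / (v (u ! 0) * lam ^ k))"
    using up len paths_mem[OF up] by (subst prod_tele) (auto simp: paths_def)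
  finally show ?thesis using last_nth_len[OF len] by simp
qed

definition cmin where "cmin = Min ((\<lambda>(i,j). p i * v j / v i) ` (Sym \<times> Sym))"
definition cmax where "cmax = Max ((\<lambda>(i,j). p i * v j / v i) ` (Sym \<times> Sym))"

lemma cmin_pos: "cmin > 0"
  unfolding cmin_def using neSym p_pos vpos by (subst Min_gr_iff) auto

lemma cyl_bounds:
  assumes u: "u \<in> lang XA (Suc k)"
  shows "cmin / lam ^ k \<le> measure M (cyl XA u)" "measure M (cyl XA u) \<le> cmax / lam ^ k"
proof -
  have up: "u \<in> paths Sym A k" using u langXA by simp
  have len: "length u = Suc k" using up by (simp add: paths_def)
  have s: "u ! 0 \<in> Sym" "last u \<in> Sym" using paths_mem[OF up, of 0] paths_last[OF up] by auto
  have mem: "p (u ! 0) * v (last u) / v (u ! 0) \<in> (\<lambda>(i,j). p i * v j / v i) ` (Sym \<times> Sym)"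
    using s by force
  have eq: "measure M (cyl XA u) = (p (u ! 0) * v (last u) / v (u ! 0)) / lam ^ k"
    using cyl_measure[OF u] by simp
  have "cmin \<le> p (u ! 0) * v (last u) / v (u ! 0)" unfolding cmin_def using mem by (intro Min_le) auto
  then show "cmin / lam ^ k \<le> measure M (cyl XA u)" unfolding eq using lam_pos by (intro divide_right_mono) auto
  have "cmax \<ge> p (u ! 0) * v (last u) / v (u ! 0)" unfolding cmax_def using mem by (intro Max_ge) auto
  then show "measure M (cyl XA u) \<le> cmax / lam ^ k" unfolding eq using lam_pos by (intro divide_right_mono) auto
qed

end



context cor32 begin

definition avoid :: "nat list \<Rightarrow> bool" where "avoid u \<longleftrightarrow> \<not> (\<exists>g\<in>G. sublist g u)"
definition Av :: "nat \<Rightarrow> nat list set" where "Av n = {u \<in> lang XA n. avoid u}"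

abbreviation "rr \<equiv> maxlen G"

lemma Glen: "g \<in> G \<Longrightarrow> 1 \<le> length g \<and> length g \<le> rr"
proof -
  assume g: "g \<in> G"
  have "g \<noteq> []" using Gwords g by blast
  moreover have "length g \<le> rr" unfolding maxlen_def using Gfin g by (intro Max_ge) auto
  ultimately show ?thesis by (cases g) auto
qed

lemma rr_pos: "rr \<ge> 1"
  using Glen Gne by fastforce

lemma lang_sub: "lang XA n \<subseteq> {w. set w \<subseteq> Sym \<and> length w = n}"
proof
  fix w assume "w \<in> lang XA n"
  then obtain y k where y: "y \<in> XA" and w: "w = map y [k..<k+n]" and l: "length w = n"
    unfolding lang_def by blast
  have "set w \<subseteq> Sym" using y unfolding w sft_def by auto
  then show "w \<in> {w. set w \<subseteq> Sym \<and> length w = n}" using l by simp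
qed

lemma lang_fin: "finite (lang XA n)"
  by (rule finite_subset[OF lang_sub finite_lists_length_eq]) simp

lemma Av_fin: "finite (Av n)"
  unfolding Av_def using lang_fin by simp

lemma cyl_sub: "cyl XA u \<subseteq> XA" by (auto simp: cyl_def)

lemma surv_lower_sub: "(\<Union>u\<in>Av (m + rr). cyl XA u) \<subseteq> survivors XA G m"
proof
  fix x assume "x \<in> (\<Union>u\<in>Av (m + rr). cyl XA u)"
  then obtain u where u: "u \<in> Av (m + rr)" and x: "x \<in> cyl XA u" by blast
  have xX: "x \<in> XA" and xu: "\<forall>i<length u. x i = u ! i" using x by (auto simp: cyl_def)
  have lu: "length u = m + rr" and au: "avoid u" using u lang_sub unfolding Av_def by auto
  have "shiftn i x \<notin> hole XA G" if i: "i \<le> m" for i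
  proof
    assume "shiftn i x \<in> hole XA G"
    then obtain g where g: "g \<in> G" "shiftn i x \<in> cyl XA g" unfolding hole_def by blast
    have xg: "\<forall>j<length g. x (j + i) = g ! j" using g(2) by (auto simp: cyl_def shiftn_def)
    have lg: "length g \<le> rr" using Glen[OF g(1)] by simp
    have "g = take (length g) (drop i u)"
    proof (rule nth_equalityI)
      show "length g = length (take (length g) (drop i u))" using lg lu i by simp
      fix j assume j: "j < length g"
      have "take (length g) (drop i u) ! j = u ! (i + j)" using j lg lu i by simp
      also have "\<dots> = x (i + j)" using xu j lg lu i by simp
      also have "\<dots> = g ! j" using xg j by (metis add.commute)
      finally show "g ! j = take (length g) (drop i u) ! j" by simp
    qed
    then have "sublist g u" by (metis sublist_drop sublist_take sublist_order.order_trans)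
    then show False using au g(1) unfolding avoid_def by blast
  qed
  then show "x \<in> survivors XA G m" using xX unfolding survivors_def by blast
qed

lemma surv_upper_sub: "survivors XA G m \<subseteq> (\<Union>u\<in>Av (Suc m). cyl XA u)"
proof
  fix x assume x: "x \<in> survivors XA G m"
  then have xX: "x \<in> XA" and xs: "\<forall>i\<le>m. shiftn i x \<notin> hole XA G" unfolding survivors_def by auto
  define u where "u = map x [0..<Suc m]"
  have lu: "length u = Suc m" by (simp add: u_def)
  have un: "u ! i = x i" if "i < Suc m" for i using that by (simp add: u_def nth_map_upt del: upt_Suc)
  have uL: "u \<in> lang XA (Suc m)" unfolding lang_def using xX lu by (auto simp: u_def intro!: bexI[of _ x] exI[of _ 0])
  have xc: "x \<in> cyl XA u" using xX un lu by (auto simp: cyl_def)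
  have "avoid u" unfolding avoid_def
  proof
    assume "\<exists>g\<in>G. sublist g u"
    then obtain g where g: "g \<in> G" "sublist g u" by blast
    then obtain ps ss where us: "u = ps @ g @ ss" unfolding sublist_def by blast
    define i where "i = length ps"
    have g1: "length g \<ge> 1" using Glen[OF g(1)] by simp
    have im: "i \<le> m" using lu us g1 unfolding i_def by simp
    have "shiftn i x \<in> cyl XA g"
    proof -
      have "\<forall>j<length g. shiftn i x j = g ! j"
      proof (intro allI impI)
        fix j assume j: "j < length g"
        have "i + j < Suc m" using lu us j unfolding i_def by simp
        then have "x (i + j) = u ! (i + j)" using un by simp
        also have "\<dots> = g ! j" unfolding us i_def using j by (simp add: nth_append)
        finally show "shiftn i x j = g ! j" by (simp add: shiftn_def add.commute)
      qed
      then show ?thesis using shiftn_sft[OF xX] by (auto simp: cyl_def)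
    qed
    then have "shiftn i x \<in> hole XA G" using g(1) unfolding hole_def by blast
    then show False using xs im by blast
  qed
  then have "u \<in> Av (Suc m)" using uL by (simp add: Av_def)
  then show "x \<in> (\<Union>u\<in>Av (Suc m). cyl XA u)" using xc by blast
qed

lemma fmM: "finite_measure M" using Mprob by (simp add: prob_space_def)

lemma cyl_setsM: "cyl XA u \<in> sets M" using cyl_meas Msets by simp

lemma mu_union:
  assumes "F \<subseteq> lang XA n"
  shows "measure M (\<Union>u\<in>F. cyl XA u) = (\<Sum>u\<in>F. measure M (cyl XA u))"
proof (rule measure_finite_Union)
  show "finite F" using finite_subset[OF assms lang_fin] .
  show "cyl XA ` F \<subseteq> sets M" using cyl_setsM by auto
  show "disjoint_family_on (cyl XA) F"
    unfolding disjoint_family_on_def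
  proof (intro ballI impI)
    fix u u' assume u: "u \<in> F" and u': "u' \<in> F" and ne: "u \<noteq> u'"
    have l: "length u = n" "length u' = n" using u u' assms lang_sub by auto
    show "cyl XA u \<inter> cyl XA u' = {}"
    proof (rule ccontr)
      assume "cyl XA u \<inter> cyl XA u' \<noteq> {}"
      then obtain x where "x \<in> cyl XA u" "x \<in> cyl XA u'" by blast
      then have "\<forall>i<n. u ! i = u' ! i" using l by (auto simp: cyl_def)
      then have "u = u'" using l by (intro nth_equalityI) auto
      with ne show False by simp
    qed
  qed
  show "emeasure M (cyl XA u) \<noteq> \<infinity>" for u using finite_measure.emeasure_finite[OF fmM] by simp
qed

lemma surv_lower:
  "measure M (survivors XA G m) \<ge> real (card (Av (m + rr))) * cmin / lam ^ (m + rr - 1)"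
proof -
  obtain k where k: "m + rr = Suc k" using rr_pos by (metis add_is_0 not_one_le_zero not0_implies_Suc)
  have "Av (m + rr) \<subseteq> lang XA (Suc k)" unfolding Av_def k by auto
  have "real (card (Av (m + rr))) * cmin / lam ^ k = (\<Sum>u\<in>Av (m + rr). cmin / lam ^ k)" by simp
  also have "\<dots> \<le> (\<Sum>u\<in>Av (m + rr). measure M (cyl XA u))"
    using cyl_bounds(1) \<open>Av (m + rr) \<subseteq> lang XA (Suc k)\<close> by (intro sum_mono) auto
  also have "\<dots> = measure M (\<Union>u\<in>Av (m + rr). cyl XA u)"
    using mu_union[OF \<open>Av (m + rr) \<subseteq> lang XA (Suc k)\<close>] by simp
  also have "\<dots> \<le> measure M (survivors XA G m)"
    using finite_measure.finite_measure_mono[OF fmM surv_lower_sub] surv_meas[OF Gfin Gne] Msets by simp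
  finally show ?thesis using k by simp
qed

lemma surv_upper:
  "measure M (survivors XA G m) \<le> real (card (Av (Suc m))) * cmax / lam ^ m"
proof -
  have sub: "Av (Suc m) \<subseteq> lang XA (Suc m)" unfolding Av_def by auto
  have "(\<Union>u\<in>Av (Suc m). cyl XA u) \<in> sets M"
    using cyl_setsM Av_fin by (intro sets.finite_UN) auto
  then have "measure M (survivors XA G m) \<le> measure M (\<Union>u\<in>Av (Suc m). cyl XA u)"
    using finite_measure.finite_measure_mono[OF fmM surv_upper_sub] by simp
  also have "\<dots> = (\<Sum>u\<in>Av (Suc m). measure M (cyl XA u))" using mu_union[OF sub] .
  also have "\<dots> \<le> (\<Sum>u\<in>Av (Suc m). cmax / lam ^ m)"
    using cyl_bounds(2) sub by (intro sum_mono) auto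
  also have "\<dots> = real (card (Av (Suc m))) * cmax / lam ^ m" by simp
  finally show ?thesis .
qed

end



lemma sublist_single: "sublist [c] xs \<longleftrightarrow> c \<in> set xs"
proof
  assume "sublist [c] xs" then show "c \<in> set xs" using set_mono_sublist by fastforce
next
  assume "c \<in> set xs"
  then obtain ys zs where "xs = ys @ c # zs" by (meson split_list)
  then show "sublist [c] xs" by (metis append_Cons append_Nil sublist_appendI)
qed

context cor32 begin

definition ss :: nat where "ss = (if rr \<ge> 2 then rr - 1 else 1)"

lemma ss_ge1: "ss \<ge> 1" unfolding ss_def by (cases "rr \<ge> 2") auto
lemma rr_le: "rr \<le> Suc ss" by (simp add: ss_def)
lemma ss_le: "ss \<le> rr" using rr_pos by (simp add: ss_def)

abbreviation "BI \<equiv> B_index XA G"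
abbreviation "BM \<equiv> B_mat XA G"

lemma BI_eq: "BI = lang XA ss"
  unfolding B_index_def ss_def by simp

definition wa :: "nat list \<Rightarrow> bool" where
  "wa u \<longleftrightarrow> set u \<subseteq> Sym \<and> (\<forall>i. Suc i < length u \<longrightarrow> A (u ! i) (u ! Suc i) = 1)"

lemma lang_wa: "lang XA n = {u. length u = n \<and> wa u}"
proof (cases n)
  case 0
  obtain x where x: "x \<in> XA" using XA_ne by blast
  have "[] \<in> lang XA 0" unfolding lang_def using x by (auto intro!: bexI[of _ x])
  moreover have "lang XA 0 \<subseteq> {[]}" unfolding lang_def by auto
  ultimately show ?thesis using 0 by (auto simp: wa_def)
next
  case (Suc k)
  then show ?thesis using langXA[of k] unfolding paths_def wa_def by auto
qed

lemma wa_snoc: "wa (u @ [b]) \<longleftrightarrow> wa u \<and> b \<in> Sym \<and> (u \<noteq> [] \<longrightarrow> A (last u) b = 1)"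
proof
  assume h: "wa (u @ [b])"
  have "\<forall>i. Suc i < length u \<longrightarrow> A (u ! i) (u ! Suc i) = 1"
  proof (intro allI impI)
    fix i assume i: "Suc i < length u"
    then have "A ((u@[b]) ! i) ((u@[b]) ! Suc i) = 1" using h unfolding wa_def by simp
    then show "A (u ! i) (u ! Suc i) = 1" using i by (simp add: nth_append)
  qed
  moreover have "u \<noteq> [] \<longrightarrow> A (last u) b = 1"
  proof
    assume "u \<noteq> []"
    then obtain k where k: "length u = Suc k" by (cases u) auto
    then have "A ((u@[b]) ! k) ((u@[b]) ! Suc k) = 1" using h unfolding wa_def by simp
    then show "A (last u) b = 1" using k last_nth_len[OF k] by (simp add: nth_append)
  qed
  ultimately show "wa u \<and> b \<in> Sym \<and> (u \<noteq> [] \<longrightarrow> A (last u) b = 1)" using h unfolding wa_def by auto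
next
  assume h: "wa u \<and> b \<in> Sym \<and> (u \<noteq> [] \<longrightarrow> A (last u) b = 1)"
  have "A ((u@[b]) ! i) ((u@[b]) ! Suc i) = 1" if i: "Suc i < length (u @ [b])" for i
  proof (cases "Suc i < length u")
    case True then show ?thesis using h unfolding wa_def by (simp add: nth_append)
  next
    case False
    then have il: "Suc i = length u" using i by simp
    then have "u \<noteq> []" by auto
    then show ?thesis using h il last_nth_len[of u i] by (simp add: nth_append)
  qed
  then show "wa (u @ [b])" using h unfolding wa_def by auto
qed

lemma wa_drop: "wa u \<Longrightarrow> wa (drop n u)"
  unfolding wa_def by (auto dest: in_set_dropD simp: add.commute[of n])

lemma avoid_mono: "avoid w \<Longrightarrow> sublist u w \<Longrightarrow> avoid u"
  unfolding avoid_def using sublist_order.order_trans by blast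

lemma avoid_snoc:
  assumes l: "length u \<ge> ss" and a: "length u \<le> ss \<or> avoid u"
    and av: "avoid (drop (length u - ss) u @ [b])"
  shows "avoid (u @ [b])"
  unfolding avoid_def
proof
  assume "\<exists>g\<in>G. sublist g (u @ [b])"
  then obtain g where g: "g \<in> G" "sublist g (u @ [b])" by blast
  define V where "V = drop (length u - ss) u @ [b]"
  have Vd: "V = drop (length u - ss) (u @ [b])" using l by (simp add: V_def)
  have lV: "length V = Suc ss" using l by (simp add: V_def)
  have lg: "length g \<le> Suc ss" using Glen[OF g(1)] rr_le by simp
  from g(2) have "suffix g (u @ [b]) \<or> sublist g u" by (simp add: sublist_snoc)
  then show False
  proof
    assume sg: "suffix g (u @ [b])"
    have sV: "suffix V (u @ [b])" unfolding Vd by (rule suffix_drop)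
    have "sublist g V"
    proof (cases "suffix g V")
      case True then show ?thesis by (rule suffix_imp_sublist)
    next
      case False
      then have "suffix V g" using suffix_same_cases[OF sg sV] by blast
      then obtain zs where "g = zs @ V" unfolding suffix_def by blast
      then have "g = V" using lg lV by simp
      then show ?thesis by simp
    qed
    then show False using av g(1) unfolding avoid_def V_def by blast
  next
    assume su: "sublist g u"
    show False
    proof (cases "length u \<le> ss")
      case True
      then have "length u = ss" using l by simp
      then have "V = u @ [b]" by (simp add: V_def)
      then have "sublist g V" using su by (metis sublist_append_rightI sublist_order.order_trans)
      then show False using av g(1) unfolding avoid_def V_def by blast
    next
      case False
      then have "avoid u" using a by simp
      then show False using su g(1) unfolding avoid_def by blast
    qed
  qed
qed

lemma BI_props: "X \<in> BI \<Longrightarrow> length X = ss \<and> X \<noteq> [] \<and> wa X"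
  using ss_ge1 unfolding BI_eq lang_wa by auto

lemma BM_eq:
  assumes U: "U \<in> BI" and V: "V \<in> BI"
  shows "BM U V = (if tl U = butlast V \<and> U @ [last V] \<in> lang XA (Suc ss) \<and> avoid (U @ [last V]) then 1 else 0)"
proof (cases "rr \<ge> 2")
  case True
  then have "Suc ss = rr" by (simp add: ss_def)
  moreover have "U \<noteq> []" "V \<noteq> []" using BI_props U V by auto
  ultimately show ?thesis using True unfolding B_mat_def avoid_def by simp
next
  case False
  then have r1: "rr = 1" using rr_pos by simp
  then have s1: "ss = 1" by (simp add: ss_def)
  obtain a where a: "U = [a]" using BI_props[OF U] s1 by (cases U) auto
  obtain b where b: "V = [b]" using BI_props[OF V] s1 by (cases V) auto
  have G1: "\<forall>g\<in>G. length g = 1" using Glen r1 by force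
  have "avoid [a, b] \<longleftrightarrow> [a] \<notin> G \<and> [b] \<notin> G"
  proof
    assume h: "avoid [a, b]"
    show "[a] \<notin> G \<and> [b] \<notin> G" using h unfolding avoid_def by (auto simp: sublist_single)
  next
    assume h: "[a] \<notin> G \<and> [b] \<notin> G"
    show "avoid [a, b]" unfolding avoid_def
    proof
      assume "\<exists>g\<in>G. sublist g [a, b]"
      then obtain g where g: "g \<in> G" "sublist g [a, b]" by blast
      then obtain c where "g = [c]" using G1 by (metis length_0_conv length_Suc_conv One_nat_def)
      then show False using g h by (auto simp: sublist_single)
    qed
  qed
  then show ?thesis using False r1 s1 unfolding B_mat_def a b by (simp add: numeral_2_eq_2)
qed

abbreviation "BP \<equiv> paths BI BM"

definition phi :: "nat list list \<Rightarrow> nat list" where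
  "phi Xs = hd Xs @ map last (tl Xs)"

definition Av' :: "nat \<Rightarrow> nat list set" where
  "Av' n = {u \<in> lang XA n. n \<le> ss \<or> avoid u}"

lemma phi_snoc: "Xs \<noteq> [] \<Longrightarrow> phi (Xs @ [Y]) = phi Xs @ [last Y]"
  unfolding phi_def by (cases Xs) auto

lemma bij_main:
  "(\<forall>Xs\<in>BP k. phi Xs \<in> Av' (k + ss) \<and> last Xs = drop k (phi Xs)) \<and> inj_on phi (BP k) \<and> Av' (k + ss) \<subseteq> phi ` BP k"
proof (induction k)
  case 0
  have p0: "BP 0 = (\<lambda>X. [X]) ` BI" by (rule paths_0)
  have a0: "Av' ss = BI" unfolding Av'_def BI_eq by auto
  show ?case
  proof (intro conjI ballI)
    fix Xs assume "Xs \<in> BP 0"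
    then obtain X where X: "X \<in> BI" "Xs = [X]" using p0 by auto
    then show "phi Xs \<in> Av' (0 + ss)" "last Xs = drop 0 (phi Xs)" using a0 by (auto simp: phi_def)
  next
    show "inj_on phi (BP 0)" unfolding p0 by (auto simp: inj_on_def phi_def)
  next
    show "Av' (0 + ss) \<subseteq> phi ` BP 0"
    proof
      fix u assume "u \<in> Av' (0 + ss)"
      then have "u \<in> BI" using a0 by simp
      then show "u \<in> phi ` BP 0" unfolding p0 by (auto simp: phi_def intro!: image_eqI[of _ _ "[u]"])
    qed
  qed
next
  case (Suc k)
  have IH1: "\<And>Xs. Xs \<in> BP k \<Longrightarrow> phi Xs \<in> Av' (k + ss) \<and> last Xs = drop k (phi Xs)" using Suc by blast
  have IH2: "inj_on phi (BP k)" using Suc by blast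
  have IH3: "Av' (k + ss) \<subseteq> phi ` BP k" using Suc by blast
  have dec: "\<exists>Xs Y. Xs' = Xs @ [Y] \<and> Xs \<in> BP k \<and> Y \<in> BI \<and> BM (last Xs) Y = 1" if X0: "Xs' \<in> BP (Suc k)" for Xs'
  proof -
    obtain Xs Y where e: "Xs' = Xs @ [Y]" by (rule paths_Suc_cases[OF X0])
    then show ?thesis using X0 paths_snoc[of Xs Y BI BM k] by auto
  qed
  have P1: "phi Xs' \<in> Av' (Suc k + ss) \<and> last Xs' = drop (Suc k) (phi Xs')" if X': "Xs' \<in> BP (Suc k)" for Xs'
  proof -
    obtain Xs Y where e: "Xs' = Xs @ [Y]" and Xs: "Xs \<in> BP k" and Y: "Y \<in> BI" and B: "BM (last Xs) Y = 1"
      using dec[OF X'] by blast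
    define u where "u = phi Xs"
    define U where "U = last Xs"
    define b where "b = last Y"
    have uA: "u \<in> Av' (k + ss)" and Ud: "U = drop k u" using IH1[OF Xs] by (auto simp: u_def U_def)
    have UB: "U \<in> BI" using paths_last[OF Xs] by (simp add: U_def)
    have cond: "tl U = butlast Y" "U @ [b] \<in> lang XA (Suc ss)" "avoid (U @ [b])"
      using B BM_eq[OF UB Y] unfolding U_def b_def by (auto split: if_splits)
    have lu: "length u = k + ss" and wu: "wa u" using uA unfolding Av'_def lang_wa by auto
    have lU: "length U = ss" using BI_props[OF UB] by simp
    have wUb: "wa (U @ [b])" using cond(2) unfolding lang_wa by simp
    have ku: "k < length u" using lu ss_ge1 by simp
    have lastU: "last U = last u" unfolding Ud using ku by simp
    have Une: "U \<noteq> []" using BI_props[OF UB] by simp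
    have "wa (u @ [b])" using wa_snoc[of u b] wa_snoc[of U b] wUb wu lastU Une by auto
    moreover have "avoid (u @ [b])"
    proof (rule avoid_snoc)
      show "ss \<le> length u" using lu by simp
      show "length u \<le> ss \<or> avoid u" using uA lu unfolding Av'_def by auto
      show "avoid (drop (length u - ss) u @ [b])" using cond(3) Ud lu by simp
    qed
    ultimately have A1: "u @ [b] \<in> Av' (Suc k + ss)" unfolding Av'_def lang_wa using lu by simp
    have Yne: "Y \<noteq> []" using BI_props[OF Y] by simp
    have "drop (Suc k) (u @ [b]) = drop (Suc k) u @ [b]" using lu ss_ge1 by simp
    also have "drop (Suc k) u = tl U" unfolding Ud by (simp add: drop_Suc tl_drop)
    also have "tl U @ [b] = Y" using cond(1) Yne unfolding b_def by simp
    finally have A2: "last Xs' = drop (Suc k) (u @ [b])" using e by simp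
    have "phi Xs' = u @ [b]" unfolding e u_def b_def using paths_ne[OF Xs] by (rule phi_snoc)
    then show ?thesis using A1 A2 by simp
  qed
  have P2: "inj_on phi (BP (Suc k))"
  proof (rule inj_onI)
    fix X1 X2 assume X1: "X1 \<in> BP (Suc k)" and X2: "X2 \<in> BP (Suc k)" and eq: "phi X1 = phi X2"
    obtain Xs1 Y1 where e1: "X1 = Xs1 @ [Y1]" and Xs1: "Xs1 \<in> BP k" and Y1: "Y1 \<in> BI" and B1: "BM (last Xs1) Y1 = 1"
      using dec[OF X1] by blast
    obtain Xs2 Y2 where e2: "X2 = Xs2 @ [Y2]" and Xs2: "Xs2 \<in> BP k" and Y2: "Y2 \<in> BI" and B2: "BM (last Xs2) Y2 = 1"
      using dec[OF X2] by blast
    have "phi Xs1 @ [last Y1] = phi Xs2 @ [last Y2]"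
      using eq unfolding e1 e2 using phi_snoc paths_ne[OF Xs1] paths_ne[OF Xs2] by simp
    then have h1: "phi Xs1 = phi Xs2" and h2: "last Y1 = last Y2" by simp_all
    have xs: "Xs1 = Xs2" using IH2 h1 Xs1 Xs2 unfolding inj_on_def by blast
    have c1: "tl (last Xs1) = butlast Y1" using B1 BM_eq[OF paths_last[OF Xs1] Y1] by (auto split: if_splits)
    have c2: "tl (last Xs2) = butlast Y2" using B2 BM_eq[OF paths_last[OF Xs2] Y2] by (auto split: if_splits)
    have "Y1 = butlast Y1 @ [last Y1]" using BI_props[OF Y1] by simp
    also have "\<dots> = butlast Y2 @ [last Y2]" using c1 c2 xs h2 by simp
    also have "\<dots> = Y2" using BI_props[OF Y2] by simp
    finally show "X1 = X2" using e1 e2 xs by simp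
  qed
  have P3: "Av' (Suc k + ss) \<subseteq> phi ` BP (Suc k)"
  proof
    fix w assume wA: "w \<in> Av' (Suc k + ss)"
    have lw: "length w = Suc k + ss" and ww: "wa w" and aw: "avoid w"
      using wA ss_ge1 unfolding Av'_def lang_wa by auto
    obtain u b where e: "w = u @ [b]" using lw by (cases w rule: rev_exhaust) auto
    have lu: "length u = k + ss" using lw e by simp
    have wu: "wa u" using ww wa_snoc e by blast
    have au: "avoid u" using aw avoid_mono e by (metis sublist_append_rightI)
    have "u \<in> Av' (k + ss)" unfolding Av'_def lang_wa using lu wu au by simp
    then obtain Xs where Xs: "Xs \<in> BP k" and u: "u = phi Xs" using IH3 by blast
    define U where "U = last Xs"
    have Ud: "U = drop k u" using IH1[OF Xs] u by (simp add: U_def)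
    have UB: "U \<in> BI" using paths_last[OF Xs] by (simp add: U_def)
    define Y where "Y = tl U @ [b]"
    have dSk: "drop (Suc k) w = Y" unfolding Y_def e Ud using lu ss_ge1 by (simp add: drop_Suc tl_drop)
    have dk: "drop k w = U @ [b]" unfolding e Ud using lu by simp
    have lU: "length U = ss" using BI_props[OF UB] by simp
    have YB: "Y \<in> BI" unfolding BI_eq lang_wa
      using wa_drop[OF ww, of "Suc k"] dSk lU ss_ge1 by (auto simp: Y_def)
    have "U @ [b] \<in> lang XA (Suc ss)" unfolding lang_wa using wa_drop[OF ww, of k] dk lU by simp
    moreover have "avoid (U @ [b])" using avoid_mono[OF aw] dk by (metis sublist_drop)
    moreover have "tl U = butlast Y" "last Y = b" by (simp_all add: Y_def)
    ultimately have "BM U Y = 1" using BM_eq[OF UB YB] by simp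
    then have "Xs @ [Y] \<in> BP (Suc k)" using paths_snoc[of Xs Y BI BM k] Xs YB unfolding U_def by simp
    moreover have "phi (Xs @ [Y]) = w" using phi_snoc[OF paths_ne[OF Xs]] u e by (simp add: Y_def)
    ultimately show "w \<in> phi ` BP (Suc k)" by (metis image_eqI)
  qed
  show ?case using P1 P2 P3 by blast
qed

lemma card_Av:
  assumes "k \<ge> 1"
  shows "card (Av (k + ss)) = card (BP k)"
proof -
  have "Av (k + ss) = Av' (k + ss)" using assms unfolding Av_def Av'_def by auto
  moreover have "bij_betw phi (BP k) (Av' (k + ss))"
    unfolding bij_betw_def using bij_main[of k] by blast
  ultimately show ?thesis by (simp add: bij_betw_same_card)
qed

end



lemma ident4: "(C::real) * (a / b) * x / d = C * x / b * (a / d)"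
  by (simp add: mult_ac)

context cor32 begin

lemma BI_fin: "finite BI" unfolding BI_eq by (rule lang_fin)

lemma BI_ne: "BI \<noteq> {}"
proof -
  obtain w where "w \<in> paths Sym A (ss - 1)" using goodA[of 0] N unfolding good_def by auto
  then have "w \<in> lang XA (Suc (ss - 1))" using langXA by simp
  then show ?thesis unfolding BI_eq using ss_ge1 by auto
qed

lemma BM_zo: "zero_one_mat BI BM"
  unfolding zero_one_mat_def B_mat_def by auto

abbreviation "rho \<equiv> spec_rad BI BM"

lemma rho_nn: "rho \<ge> 0" using spec_rad_nonneg[OF BI_fin BI_ne] .

lemma BP_lower: "\<forall>k. real (card (BP k)) \<ge> rho ^ k"
  using paths_lower[OF BI_fin BI_ne BM_zo] by blast

lemma BP_upper: "rho < r \<Longrightarrow> \<exists>C. \<forall>k. real (card (BP k)) \<le> C * r ^ k"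
  using paths_upper[OF BI_fin BI_ne BM_zo] by blast

lemma cmax_ge: "cmax \<ge> cmin"
proof -
  have ne: "(\<lambda>(i,j). p i * v j / v i) ` (Sym \<times> Sym) \<noteq> {}" using neSym by auto
  have fin: "finite ((\<lambda>(i,j). p i * v j / v i) ` (Sym \<times> Sym))" by simp
  obtain x where x: "x \<in> (\<lambda>(i,j). p i * v j / v i) ` (Sym \<times> Sym)" using ne by blast
  show ?thesis unfolding cmin_def cmax_def using Min_le[OF fin x] Max_ge[OF fin x] by linarith
qed

lemma main_pos:
  assumes pos: "rho > 0"
  shows "(\<lambda>m. - ln (measure M (survivors XA G m)) / real m) \<longlonglongrightarrow> - ln (rho / lam)"
    "- ln (rho / lam) = htop XA - htop (sft BI BM)"
proof -
  define f where "f = (\<lambda>m. measure M (survivors XA G m))"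
  have lam0: "lam > 0" by (rule lam_pos)
  have q0: "rho / lam > 0" using pos lam0 by simp
  define c where "c = rho ^ (rr - ss) * cmin / lam ^ (rr - 1)"
  have c0: "c > 0" using pos lam0 cmin_pos by (simp add: c_def)
  have lo: "\<forall>\<^sub>F m in sequentially. f m \<ge> c * (rho / lam) ^ m"
    unfolding eventually_sequentially
  proof (intro exI[of _ 1] allI impI)
    fix m :: nat assume m: "m \<ge> 1"
    define k where "k = m + (rr - ss)"
    have k1: "k \<ge> 1" using m by (simp add: k_def)
    have mk: "m + rr = k + ss" using ss_le by (simp add: k_def)
    have "rho ^ k \<le> real (card (BP k))" using BP_lower by blast
    also have "\<dots> = real (card (Av (m + rr)))" using card_Av[OF k1] mk by simp
    finally have h1: "rho ^ k \<le> real (card (Av (m + rr)))" .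
    have "rho ^ k * cmin / lam ^ (m + rr - 1) \<le> real (card (Av (m + rr))) * cmin / lam ^ (m + rr - 1)"
      using h1 cmin_pos lam0 by (intro divide_right_mono mult_right_mono) auto
    also have "\<dots> \<le> f m" using surv_lower unfolding f_def by simp
    finally have h2: "rho ^ k * cmin / lam ^ (m + rr - 1) \<le> f m" .
    have e1: "m + rr - 1 = m + (rr - 1)" using rr_pos by simp
    have "c * (rho / lam) ^ m = rho ^ k * cmin / lam ^ (m + rr - 1)"
      unfolding c_def k_def e1 using lam0 by (simp add: power_add power_divide field_simps)
    then show "f m \<ge> c * (rho / lam) ^ m" using h2 by simp
  qed
  have up: "\<exists>C. \<forall>\<^sub>F m in sequentially. f m \<le> C * r' ^ m" if r': "r' > rho / lam" for r'
  proof -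
    define r where "r = r' * lam"
    have rr': "r > rho" using r' lam0 by (simp add: r_def pos_divide_less_eq)
    have r0: "r > 0" using rr' rho_nn by simp
    obtain C where C: "\<forall>k. real (card (BP k)) \<le> C * r ^ k" using BP_upper[OF rr'] by blast
    define C' where "C' = C * cmax / r ^ (ss - 1)"
    have "\<forall>\<^sub>F m in sequentially. f m \<le> C' * r' ^ m"
      unfolding eventually_sequentially
    proof (intro exI[of _ ss] allI impI)
      fix m assume m: "m \<ge> ss"
      define k where "k = Suc m - ss"
      have k1: "k \<ge> 1" using m by (simp add: k_def)
      have mk: "Suc m = k + ss" using m by (simp add: k_def)
      have "f m \<le> real (card (Av (Suc m))) * cmax / lam ^ m" using surv_upper unfolding f_def by simp
      also have "real (card (Av (Suc m))) = real (card (BP k))" using card_Av[OF k1] mk by simp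
      also have "real (card (BP k)) * cmax / lam ^ m \<le> C * r ^ k * cmax / lam ^ m"
        using C cmin_pos cmax_ge lam0 by (intro divide_right_mono mult_right_mono) auto
      also have "C * r ^ k * cmax / lam ^ m = C' * r' ^ m"
      proof -
        have "m = k + (ss - 1)" using m ss_ge1 by (simp add: k_def)
        then have "r ^ m = r ^ k * r ^ (ss - 1)" by (simp add: power_add)
        then have e1: "r ^ k = r ^ m / r ^ (ss - 1)" using r0 by simp
        have e2: "r' ^ m = r ^ m / lam ^ m" using lam0 by (simp add: r_def power_mult_distrib)
        show ?thesis unfolding C'_def e1 e2 by (rule ident4)
      qed
      finally show "f m \<le> C' * r' ^ m" .
    qed
    then show ?thesis by blast
  qed
  have "(\<lambda>m. ln (f m) / real m) \<longlonglongrightarrow> ln (rho / lam)"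
    by (rule growth_lim[OF q0]) (use c0 lo up in blast)+
  then have "(\<lambda>m. - (ln (f m) / real m)) \<longlonglongrightarrow> - ln (rho / lam)" by (rule tendsto_minus)
  then show "(\<lambda>m. - ln (measure M (survivors XA G m)) / real m) \<longlonglongrightarrow> - ln (rho / lam)"
    unfolding f_def minus_divide_left[symmetric] .
  have hA: "htop XA = ln lam" using htop_sft[OF finSym neSym A01 lam0] .
  have hB: "htop (sft BI BM) = ln rho" using htop_sft[OF BI_fin BI_ne BM_zo pos] .
  show "- ln (rho / lam) = htop XA - htop (sft BI BM)" unfolding hA hB using pos lam0 by (simp add: ln_div)
qed

lemma main_zero:
  assumes z: "rho = 0"
  shows "\<forall>\<^sub>F m in sequentially. measure M (survivors XA G m) = 0"
proof -
  obtain C where C: "\<forall>k. real (card (BP k)) \<le> C * (1/2) ^ k" using BP_upper[of "1/2"] z by auto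
  have "(\<lambda>k. C * (1/2::real) ^ k) \<longlonglongrightarrow> 0"
    by (intro tendsto_mult_right_zero LIMSEQ_power_zero) simp
  then have "\<forall>\<^sub>F k in sequentially. C * (1/2::real) ^ k < 1" by (rule order_tendstoD(2)) simp
  then obtain K where K: "\<And>k. k \<ge> K \<Longrightarrow> C * (1/2::real) ^ k < 1" unfolding eventually_sequentially by blast
  have c0: "card (BP k) = 0" if "k \<ge> K" for k
  proof -
    have "real (card (BP k)) < 1" using C K[OF that] by (meson order.strict_trans1)
    then show ?thesis by simp
  qed
  show ?thesis unfolding eventually_sequentially
  proof (intro exI[of _ "ss + K"] allI impI)
    fix m assume m: "m \<ge> ss + K"
    define k where "k = Suc m - ss"
    have k1: "k \<ge> 1" and kK: "k \<ge> K" using m by (auto simp: k_def)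
    have mk: "Suc m = k + ss" using m by (simp add: k_def)
    have "card (Av (Suc m)) = 0" using card_Av[OF k1] mk c0[OF kK] by simp
    then have "measure M (survivors XA G m) \<le> 0" using surv_upper[of m] by simp
    then show "measure M (survivors XA G m) = 0" using measure_nonneg[of M] by (simp add: order_antisym)
  qed
qed

lemma final:
  "(rho > 0 \<longrightarrow>
      ((\<lambda>m. - ln (measure M (survivors XA G m)) / real m) \<longlonglongrightarrow> - ln (rho / lam))
      \<and> - ln (rho / lam) = htop XA - htop (sft BI BM))
   \<and> (rho = 0 \<longrightarrow> (\<forall>\<^sub>F m in sequentially. measure M (survivors XA G m) = 0))"
  using main_pos main_zero by blast

end

theorem corollary3p2:
  fixes N :: nat and A :: "nat \<Rightarrow> nat \<Rightarrow> real" and v p :: "nat \<Rightarrow> real"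
    and M :: "(nat \<Rightarrow> nat) measure" and G :: "nat list set"
  defines "Sym \<equiv> {..<N}"
  defines "XA \<equiv> sft Sym A"
  defines "lamA \<equiv> spec_rad Sym A"
  defines "P \<equiv> (\<lambda>i j. A i j * v j / (lamA * v i))"
  assumes N: "N \<ge> 1"
    and A01: "zero_one_mat Sym A"
    and Airr: "irreducible_mat Sym A"
    and vpos: "\<forall>i\<in>Sym. v i > 0"
    and veig: "\<forall>i\<in>Sym. (\<Sum>j\<in>Sym. A i j * v j) = lamA * v i"
    and pnonneg: "\<forall>i\<in>Sym. p i \<ge> 0"
    and psum: "(\<Sum>i\<in>Sym. p i) = 1"
    and pstat: "\<forall>j\<in>Sym. (\<Sum>i\<in>Sym. p i * P i j) = p j"
    and Mprob: "prob_space M"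
    and Msets: "sets M = sets (PiM UNIV (\<lambda>_. count_space (UNIV :: nat set)))"
    and Mcyl: "\<forall>n\<ge>1. \<forall>w\<in>lang XA n.
                 measure M (cyl XA w) = p (w ! 0) * (\<Prod>i<n - 1. P (w ! i) (w ! (i + 1)))"
    and Gfin: "finite G" and Gne: "G \<noteq> {}"
    and Gwords: "\<forall>w\<in>G. w \<noteq> [] \<and> w \<in> lang XA (length w)"
  shows "(spec_rad (B_index XA G) (B_mat XA G) > 0 \<longrightarrow>
            ((\<lambda>m. - ln (measure M (survivors XA G m)) / real m)
               \<longlonglongrightarrow> - ln (spec_rad (B_index XA G) (B_mat XA G) / lamA))
            \<and> - ln (spec_rad (B_index XA G) (B_mat XA G) / lamA)
                = htop XA - htop (sft (B_index XA G) (B_mat XA G)))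
       \<and> (spec_rad (B_index XA G) (B_mat XA G) = 0 \<longrightarrow>
            (\<forall>\<^sub>F m in sequentially. measure M (survivors XA G m) = 0))"
proof -
  have loc: "cor32 N A v p M G"
    unfolding cor32_def
    using N A01 Airr vpos veig pnonneg psum pstat Mprob Msets Mcyl Gfin Gne Gwords
    unfolding Sym_def XA_def lamA_def P_def by simp
  interpret c: cor32 N A v p M G by (rule loc)
  show ?thesis unfolding Sym_def XA_def lamA_def using c.final .
qed

end
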